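(* Let $\Gamma$ be a finitely generated group acting cocompactly by automorphisms without edge inversions on a tree, such that no vertex is fixed by all of $\Gamma$ and all edge stabilizers are amenable. Then $\Gamma$ is extraterrestrial.
   Context: Cocompact means the quotient graph of the tree by $\Gamma$ is finite. A finitely generated group is extraterrestrial if its Cayley graph with respect to some (equivalently any) finite symmetric generating set is extraterrestrial, where a graph $G=(V,E)$ is extraterrestrial if for every $m$ there is $k$ such that for every $r$ there is a triple $(U,F,O)$ of pairwise disjoint finite vertex sets with $U\neq\emptyset$, $|U|\ge m|F|$, a bijection $\mu:U\to O$ with $d_G(u,\mu(u))\le k$, and every path from $U$ to $O$ either contains a vertex of $F$ or has length at least $r$. *)

theory Defs
  imports Complex_Main "HOL-Algebra.Group_Action" "HOL-Algebra.Generated_Groups"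
begin

text \<open>A walk is a nonempty list of vertices of V, consecutive ones adjacent;
  its length is the number of edges, i.e. length of the list minus one.\<close>

definition walk :: "'v set \<Rightarrow> ('v \<Rightarrow> 'v \<Rightarrow> bool) \<Rightarrow> 'v list \<Rightarrow> bool" where
  "walk V E xs \<longleftrightarrow> xs \<noteq> [] \<and> set xs \<subseteq> V \<and>
     (\<forall>i. Suc i < length xs \<longrightarrow> E (xs ! i) (xs ! Suc i))"

definition dist_le :: "'v set \<Rightarrow> ('v \<Rightarrow> 'v \<Rightarrow> bool) \<Rightarrow> 'v \<Rightarrow> 'v \<Rightarrow> nat \<Rightarrow> bool" where
  "dist_le V E u v k \<longleftrightarrow>
     (\<exists>xs. walk V E xs \<and> hd xs = u \<and> last xs = v \<and> length xs - 1 \<le> k)"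

definition extraterrestrial :: "'v set \<Rightarrow> ('v \<Rightarrow> 'v \<Rightarrow> bool) \<Rightarrow> bool" where
  "extraterrestrial V E \<longleftrightarrow>
     (\<forall>m::nat. \<exists>k::nat. \<forall>r::nat. \<exists>U F Ob.
        U \<subseteq> V \<and> F \<subseteq> V \<and> Ob \<subseteq> V \<and>
        finite U \<and> finite F \<and> finite Ob \<and>
        U \<inter> F = {} \<and> U \<inter> Ob = {} \<and> F \<inter> Ob = {} \<and>
        U \<noteq> {} \<and> card U \<ge> m * card F \<and>
        (\<exists>\<mu>. bij_betw \<mu> U Ob \<and> (\<forall>u\<in>U. dist_le V E u (\<mu> u) k)) \<and>
        (\<forall>xs. walk V E xs \<and> hd xs \<in> U \<and> last xs \<in> Ob \<longrightarrow>
             (\<exists>x\<in>set xs. x \<in> F) \<or> length xs - 1 \<ge> r))"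

definition is_tree :: "('v \<Rightarrow> 'v \<Rightarrow> bool) \<Rightarrow> bool" where
  "is_tree E \<longleftrightarrow>
     (\<forall>u v. E u v \<longrightarrow> E v u) \<and> (\<forall>u. \<not> E u u) \<and>
     (\<forall>u v. \<exists>xs. walk UNIV E xs \<and> hd xs = u \<and> last xs = v) \<and>
     \<not> (\<exists>xs. walk UNIV E xs \<and> distinct xs \<and> length xs \<ge> 3 \<and> E (last xs) (hd xs))"

definition finitely_generated :: "('g, 'b) monoid_scheme \<Rightarrow> bool" where
  "finitely_generated G \<longleftrightarrow>
     (\<exists>S. finite S \<and> S \<subseteq> carrier G \<and> generate G S = carrier G)"

definition amenable :: "('g, 'b) monoid_scheme \<Rightarrow> bool" where
  "amenable G \<longleftrightarrow>
     (\<exists>\<mu> :: 'g set \<Rightarrow> real.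
        \<mu> (carrier G) = 1 \<and>
        (\<forall>A. A \<subseteq> carrier G \<longrightarrow> \<mu> A \<ge> 0) \<and>
        (\<forall>A B. A \<subseteq> carrier G \<longrightarrow> B \<subseteq> carrier G \<longrightarrow> A \<inter> B = {} \<longrightarrow>
              \<mu> (A \<union> B) = \<mu> A + \<mu> B) \<and>
        (\<forall>g A. g \<in> carrier G \<longrightarrow> A \<subseteq> carrier G \<longrightarrow>
              \<mu> ((\<lambda>x. g \<otimes>\<^bsub>G\<^esub> x) ` A) = \<mu> A))"

definition cayley_adj :: "('g, 'b) monoid_scheme \<Rightarrow> 'g set \<Rightarrow> 'g \<Rightarrow> 'g \<Rightarrow> bool" where
  "cayley_adj G S x y \<longleftrightarrow>
     x \<in> carrier G \<and> y \<in> carrier G \<and> (\<exists>s\<in>S. y = x \<otimes>\<^bsub>G\<^esub> s)"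

definition extraterrestrial_group :: "('g, 'b) monoid_scheme \<Rightarrow> bool" where
  "extraterrestrial_group G \<longleftrightarrow>
     (\<exists>S. finite S \<and> S \<subseteq> carrier G \<and> (\<forall>s\<in>S. inv\<^bsub>G\<^esub> s \<in> S) \<and>
          generate G S = carrier G \<and>
          extraterrestrial (carrier G) (cayley_adj G S))"

definition acts_on_tree ::
  "('g, 'b) monoid_scheme \<Rightarrow> ('g \<Rightarrow> 'v \<Rightarrow> 'v) \<Rightarrow> ('v \<Rightarrow> 'v \<Rightarrow> bool) \<Rightarrow> bool" where
  "acts_on_tree G \<phi> T \<longleftrightarrow> group_action G UNIV \<phi> \<and> is_tree T \<and>
     (\<forall>g\<in>carrier G. \<forall>u v. T u v \<longleftrightarrow> T (\<phi> g u) (\<phi> g v))"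

definition without_inversions ::
  "('g, 'b) monoid_scheme \<Rightarrow> ('g \<Rightarrow> 'v \<Rightarrow> 'v) \<Rightarrow> ('v \<Rightarrow> 'v \<Rightarrow> bool) \<Rightarrow> bool" where
  "without_inversions G \<phi> T \<longleftrightarrow>
     \<not> (\<exists>g\<in>carrier G. \<exists>u v. T u v \<and> \<phi> g u = v \<and> \<phi> g v = u)"

text \<open>Cocompact: the quotient graph has finitely many vertices (vertex orbits)
  and finitely many edges (orbits of oriented edges).\<close>
definition cocompact ::
  "('g, 'b) monoid_scheme \<Rightarrow> ('g \<Rightarrow> 'v \<Rightarrow> 'v) \<Rightarrow> ('v \<Rightarrow> 'v \<Rightarrow> bool) \<Rightarrow> bool" where
  "cocompact G \<phi> T \<longleftrightarrow>
     finite ((\<lambda>u. orbit G \<phi> u) ` UNIV) \<and>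
     finite ((\<lambda>(u, v). {(\<phi> g u, \<phi> g v) | g. g \<in> carrier G}) ` {(u, v). T u v})"

definition edge_stabilizer ::
  "('g, 'b) monoid_scheme \<Rightarrow> ('g \<Rightarrow> 'v \<Rightarrow> 'v) \<Rightarrow> 'v \<Rightarrow> 'v \<Rightarrow> 'g set" where
  "edge_stabilizer G \<phi> u v =
     {g \<in> carrier G. (\<phi> g u = u \<and> \<phi> g v = v) \<or> (\<phi> g u = v \<and> \<phi> g v = u)}"

end

theory Submission
  imports Defs "HOL-Library.Countable_Set"
begin

fun rpath :: "('a \<Rightarrow> 'a \<Rightarrow> bool) \<Rightarrow> 'a list \<Rightarrow> bool" where
  "rpath R [] = False"
| "rpath R [x] = True"
| "rpath R (x # y # xs) = (R x y \<and> rpath R (y # xs))"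

lemma rpath_Cons: "rpath R (x # xs) \<longleftrightarrow> (xs = [] \<or> (R x (hd xs) \<and> rpath R xs))"
  by (cases xs) auto

lemma rpath_nonempty: "rpath R xs \<Longrightarrow> xs \<noteq> []" by auto

lemma rpath_steps: "rpath R xs \<Longrightarrow> Suc i < length xs \<Longrightarrow> R (xs ! i) (xs ! Suc i)"
proof (induction R xs arbitrary: i rule: rpath.induct)
  case (3 R x y xs)
  then show ?case by (cases i) auto
qed auto

lemma steps_rpath: "xs \<noteq> [] \<Longrightarrow> (\<forall>i. Suc i < length xs \<longrightarrow> R (xs ! i) (xs ! Suc i)) \<Longrightarrow> rpath R xs"
proof (induction xs)
  case (Cons x xs)
  show ?case
  proof (cases xs)
    case (Cons y ys)
    have "R x y" using Cons.prems(2)[rule_format, of 0] Cons by auto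
    moreover have "rpath R xs"
      using Cons.IH Cons.prems(2) \<open>xs = y # ys\<close> by (metis Suc_less_eq length_Cons list.distinct(1) nth_Cons_Suc)
    ultimately show ?thesis using Cons by simp
  qed simp
qed simp

lemma walk_iff_rpath: "walk UNIV E xs \<longleftrightarrow> rpath E xs"
  unfolding walk_def using rpath_steps steps_rpath rpath_nonempty by blast

lemma rpath_rtranclp: "rpath R xs \<Longrightarrow> R\<^sup>*\<^sup>* (hd xs) (last xs)"
  by (induction R xs rule: rpath.induct) auto

lemma rtranclp_rpath: "R\<^sup>*\<^sup>* u v \<Longrightarrow> \<exists>xs. rpath R xs \<and> hd xs = u \<and> last xs = v"
proof (induction rule: converse_rtranclp_induct)
  case base
  then show ?case by (intro exI[of _ "[v]"]) auto
next
  case (step y z)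
  then obtain xs where "rpath R xs" "hd xs = z" "last xs = v" by blast
  then show ?case using step by (intro exI[of _ "y # xs"]) (cases xs, auto)
qed

lemma rpath_mono: "rpath R xs \<Longrightarrow> (\<And>u v. R u v \<Longrightarrow> S u v) \<Longrightarrow> rpath S xs"
  by (induction R xs rule: rpath.induct) auto

lemma rpath_suffix: "rpath R (xs @ ys) \<Longrightarrow> ys \<noteq> [] \<Longrightarrow> rpath R ys"
proof (induction xs)
  case (Cons a xs)
  then show ?case by (simp add: rpath_Cons)
qed simp

lemma rpath_distinct:
  "rpath R xs \<Longrightarrow> \<exists>ys. rpath R ys \<and> distinct ys \<and> hd ys = hd xs \<and> last ys = last xs"
proof (induction xs)
  case (Cons x xs)
  show ?case
  proof (cases "xs = []")
    case True then show ?thesis by (intro exI[of _ "[x]"]) auto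
  next
    case False
    with Cons.prems have "rpath R xs" "R x (hd xs)" by (auto simp: rpath_Cons)
    with Cons.IH obtain ys where ys: "rpath R ys" "distinct ys" "hd ys = hd xs" "last ys = last xs"
      by blast
    show ?thesis
    proof (cases "x \<in> set ys")
      case False
      have "ys \<noteq> []" using ys(1) by auto
      then show ?thesis using ys False \<open>R x (hd xs)\<close> \<open>xs \<noteq> []\<close>
        by (intro exI[of _ "x # ys"]) (auto simp: rpath_Cons)
    next
      case True
      then obtain pre post where sp: "ys = pre @ x # post" by (meson split_list)
      have "rpath R (x # post)" using rpath_suffix[of R pre "x # post"] ys(1) sp by simp
      moreover have "distinct (x # post)" using ys(2) sp by simp
      moreover have "last (x # post) = last (x # xs)"
        using ys(4) sp \<open>xs \<noteq> []\<close> by (cases post) auto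
      ultimately show ?thesis by (intro exI[of _ "x # post"]) auto
    qed
  qed
qed simp

definition Rx :: "('v \<Rightarrow> 'v \<Rightarrow> bool) \<Rightarrow> 'v \<Rightarrow> 'v \<Rightarrow> 'v \<Rightarrow> 'v \<Rightarrow> bool" where
  "Rx T x y u v \<longleftrightarrow> T u v \<and> \<not> (u = x \<and> v = y) \<and> \<not> (u = y \<and> v = x)"

definition Side :: "('v \<Rightarrow> 'v \<Rightarrow> bool) \<Rightarrow> 'v \<Rightarrow> 'v \<Rightarrow> 'v set" where
  "Side T x y = {z. (Rx T x y)\<^sup>*\<^sup>* z y}"

definition sep :: "('v \<Rightarrow> 'v \<Rightarrow> bool) \<Rightarrow> 'v \<Rightarrow> 'v \<Rightarrow> ('v \<times> 'v) set" where
  "sep T x y = {(p, q). T p q \<and> x \<notin> Side T p q \<and> y \<in> Side T p q}"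

definition dd :: "('v \<Rightarrow> 'v \<Rightarrow> bool) \<Rightarrow> 'v \<Rightarrow> 'v \<Rightarrow> nat" where
  "dd T x y = card (sep T x y)"

lemma Rx_swap: "Rx T y x = Rx T x y"
  unfolding Rx_def by (intro ext) auto

locale tree =
  fixes T :: "'v \<Rightarrow> 'v \<Rightarrow> bool"
  assumes is_tree: "is_tree T"
begin

lemma symT: "T u v \<Longrightarrow> T v u" using is_tree unfolding is_tree_def by blast
lemma irrT: "\<not> T u u" using is_tree unfolding is_tree_def by blast
lemma conn: "T\<^sup>*\<^sup>* u v"
proof -
  obtain xs where "walk UNIV T xs" "hd xs = u" "last xs = v"
    using is_tree unfolding is_tree_def by blast
  then show ?thesis using rpath_rtranclp walk_iff_rpath by metis
qed
lemma acyc: "\<not> (rpath T xs \<and> distinct xs \<and> length xs \<ge> 3 \<and> T (last xs) (hd xs))"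
  using is_tree unfolding is_tree_def walk_iff_rpath by blast

lemma Rx_sym: "Rx T x y u v \<Longrightarrow> Rx T x y v u"
  unfolding Rx_def using symT by blast

lemma Rx_T: "Rx T x y u v \<Longrightarrow> T u v" unfolding Rx_def by blast

lemma Rx_rtr_sym: "(Rx T x y)\<^sup>*\<^sup>* u v \<Longrightarrow> (Rx T x y)\<^sup>*\<^sup>* v u"
proof (induction rule: rtranclp_induct)
  case (step v w)
  then show ?case using Rx_sym converse_rtranclp_into_rtranclp by metis
qed simp

lemma Side_refl: "y \<in> Side T x y" unfolding Side_def by simp

lemma Side_acyc: assumes "T x y" shows "x \<notin> Side T x y"
proof
  assume "x \<in> Side T x y"
  then have "(Rx T x y)\<^sup>*\<^sup>* x y" unfolding Side_def by simp
  then obtain xs where "rpath (Rx T x y) xs" "hd xs = x" "last xs = y" using rtranclp_rpath by metis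
  then obtain ys where ys: "rpath (Rx T x y) ys" "distinct ys" "hd ys = x" "last ys = y"
    using rpath_distinct by metis
  have "x \<noteq> y" using assms irrT by metis
  have "length ys \<noteq> 0" using ys(1) by auto
  moreover have "length ys \<noteq> 1"
    using ys \<open>x \<noteq> y\<close> by (cases ys) auto
  moreover have "length ys \<noteq> 2"
  proof
    assume "length ys = 2"
    then obtain a b where "ys = [a, b]" by (cases ys; cases "tl ys") auto
    then show False using ys unfolding Rx_def by auto
  qed
  ultimately have "length ys \<ge> 3" by linarith
  moreover have "rpath T ys" using ys(1) rpath_mono Rx_T by metis
  moreover have "T (last ys) (hd ys)" using ys symT assms by simp
  ultimately show False using acyc ys(2) by blast
qed

lemma Side_step: "z \<in> Side T x y \<Longrightarrow> Rx T x y z' z \<Longrightarrow> z' \<in> Side T x y"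
  unfolding Side_def by (simp add: converse_rtranclp_into_rtranclp)

lemma Side_cover: assumes "T x y" shows "z \<in> Side T x y \<or> z \<in> Side T y x"
proof -
  have "T\<^sup>*\<^sup>* z y" by (rule conn)
  then show ?thesis
  proof (induction rule: converse_rtranclp_induct)
    case base then show ?case by (simp add: Side_refl)
  next
    case (step z z')
    show ?case
    proof (cases "Rx T x y z z'")
      case True
      then have "Rx T x y z z'" "Rx T y x z z'" using Rx_swap by metis+
      then show ?thesis using step.IH Side_step[of z' x y z] Side_step[of z' y x z] by blast
    next
      case False
      then have "(z = x \<and> z' = y) \<or> (z = y \<and> z' = x)" using step(1) unfolding Rx_def by blast
      then show ?thesis using Side_refl by metis
    qed
  qed
qed

lemma Side_disj: assumes "T x y" shows "\<not> (z \<in> Side T x y \<and> z \<in> Side T y x)"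
proof
  assume "z \<in> Side T x y \<and> z \<in> Side T y x"
  then have 1: "(Rx T x y)\<^sup>*\<^sup>* z y" and 2: "(Rx T x y)\<^sup>*\<^sup>* z x"
    unfolding Side_def by (simp_all add: Rx_swap[of T y x])
  have "(Rx T x y)\<^sup>*\<^sup>* x y" using rtranclp_trans[OF Rx_rtr_sym[OF 2] 1] .
  then show False using Side_acyc[OF assms] unfolding Side_def by simp
qed

lemma Side_compl: "T x y \<Longrightarrow> z \<in> Side T y x \<longleftrightarrow> z \<notin> Side T x y"
  using Side_cover[of x y z] Side_disj[of x y z] by blast

lemma crossing: assumes "T x y" "T u v" "u \<in> Side T x y" "v \<notin> Side T x y"
  shows "u = y \<and> v = x"
proof -
  have "\<not> Rx T x y v u" using assms(3,4) Side_step[of u x y v] by blast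
  moreover have "T v u" using symT[OF assms(2)] .
  ultimately have "(v = x \<and> u = y) \<or> (v = y \<and> u = x)" unfolding Rx_def by blast
  then show ?thesis using assms(3) Side_acyc[OF assms(1)] by blast
qed

lemma sep_self: "sep T x x = {}" unfolding sep_def by auto

lemma sep_step: assumes "T x z" shows "sep T x w \<subseteq> insert (x, z) (sep T z w)"
proof
  fix e assume e: "e \<in> sep T x w"
  obtain p q where pq: "e = (p, q)" by fastforce
  show "e \<in> insert (x, z) (sep T z w)"
  proof (cases "z \<in> Side T p q")
    case True
    have "T z x" using symT[OF assms] .
    moreover have "x \<notin> Side T p q" "T p q" using e pq unfolding sep_def by auto
    ultimately have "z = q \<and> x = p" using crossing True by blast
    then show ?thesis using pq by simp
  next
    case False
    then show ?thesis using e pq unfolding sep_def by auto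
  qed
qed

lemma sep_finite: "finite (sep T x w)"
proof -
  have "T\<^sup>*\<^sup>* x w" by (rule conn)
  then show ?thesis
  proof (induction rule: converse_rtranclp_induct)
    case base then show ?case by (simp add: sep_self)
  next
    case (step x z)
    then show ?case using sep_step finite_subset by (metis finite_insert)
  qed
qed

lemma sep_Side: assumes "T x z" "w \<in> Side T x z"
  shows "sep T x w = insert (x, z) (sep T z w)" "(x, z) \<notin> sep T z w"
proof -
  have a: "(x, z) \<in> sep T x w" using assms Side_acyc unfolding sep_def by auto
  have b: "(x, z) \<notin> sep T z w" using Side_refl unfolding sep_def by auto
  have "T z x" using symT[OF assms(1)] .
  have c: "(z, x) \<notin> sep T z w" using Side_disj assms unfolding sep_def by auto
  have "sep T z w \<subseteq> sep T x w" using sep_step[OF \<open>T z x\<close>, of w] c by blast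
  then show "sep T x w = insert (x, z) (sep T z w)" using sep_step[OF assms(1), of w] a by blast
  show "(x, z) \<notin> sep T z w" by (rule b)
qed

lemma dd_Side: "T x z \<Longrightarrow> w \<in> Side T x z \<Longrightarrow> dd T x w = Suc (dd T z w)"
  unfolding dd_def using sep_Side sep_finite by (metis card_insert_disjoint)

lemma toward: assumes "x \<noteq> y" shows "\<exists>z. T x z \<and> y \<in> Side T x z"
proof -
  have "T\<^sup>*\<^sup>* y x" by (rule conn)
  then show ?thesis using assms
  proof (induction rule: converse_rtranclp_induct)
    case base then show ?case by simp
  next
    case (step y y')
    show ?case
    proof (cases "y' = x")
      case True
      then show ?thesis using step Side_refl symT[OF step(1)] by blast
    next
      case False
      with step.IH obtain z where z: "T x z" "y' \<in> Side T x z" by blast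
      show ?thesis
      proof (cases "Rx T x z y y'")
        case True
        then show ?thesis using z Side_step by blast
      next
        case False
        then have "(y = x \<and> y' = z) \<or> (y = z \<and> y' = x)" using step(1) unfolding Rx_def by blast
        then show ?thesis using step.prems \<open>y' \<noteq> x\<close> by blast
      qed
    qed
  qed
qed

lemma dd_zero: "dd T x y = 0 \<longleftrightarrow> x = y"
proof
  assume "dd T x y = 0"
  show "x = y"
  proof (rule ccontr)
    assume "x \<noteq> y"
    then obtain z where "T x z" "y \<in> Side T x z" using toward by blast
    then have "(x, z) \<in> sep T x y" using Side_acyc unfolding sep_def by auto
    then show False using \<open>dd T x y = 0\<close> sep_finite unfolding dd_def by (metis card_0_eq empty_iff)
  qed
qed (simp add: dd_def sep_self)

lemma dd_one: assumes "dd T x y = 1" shows "T x y"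
proof -
  have "x \<noteq> y" using assms dd_zero by force
  then obtain z where z: "T x z" "y \<in> Side T x z" using toward by blast
  then have "dd T z y = 0" using dd_Side assms by simp
  then show ?thesis using z dd_zero by simp
qed

lemma Side_path_avoid:
  assumes "(Rx T p q)\<^sup>*\<^sup>* u v" "v \<in> Side T p q" "u \<in> Side T z z2" "z \<notin> Side T p q" "T z z2"
  shows "v \<in> Side T z z2"
  using assms
proof (induction rule: rtranclp_induct)
  case base then show ?case by simp
next
  case (step v' v)
  have "v' \<in> Side T p q" using step Side_step by blast
  then have v'S: "v' \<in> Side T z z2" using step by blast
  show ?case
  proof (cases "Rx T z z2 v v'")
    case True then show ?thesis using v'S Side_step by blast
  next
    case False
    moreover have "T v v'" using symT[OF Rx_T[OF step(2)]] .
    ultimately have "(v = z \<and> v' = z2) \<or> (v = z2 \<and> v' = z)" unfolding Rx_def by blast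
    then show ?thesis using step.prems \<open>v' \<in> Side T p q\<close> by blast
  qed
qed

lemma dd_less: assumes "T z z2" "y \<in> Side T z z2" "w \<in> Side T z2 z"
  shows "dd T z w < dd T y w"
proof -
  have sub: "sep T z w \<subseteq> sep T y w"
  proof
    fix e assume e: "e \<in> sep T z w"
    obtain p q where pq: "e = (p, q)" by fastforce
    have pq': "T p q" "z \<notin> Side T p q" "w \<in> Side T p q" using e pq unfolding sep_def by auto
    have "y \<notin> Side T p q"
    proof
      assume yS: "y \<in> Side T p q"
      have "(Rx T p q)\<^sup>*\<^sup>* y w" using yS pq'(3) Rx_rtr_sym rtranclp_trans unfolding Side_def by (metis mem_Collect_eq)
      then have "w \<in> Side T z z2" using Side_path_avoid pq' assms by blast
      then show False using Side_disj assms by blast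
    qed
    then show "e \<in> sep T y w" using pq pq' unfolding sep_def by auto
  qed
  have "T z2 z" using symT[OF assms(1)] .
  have "(z2, z) \<in> sep T y w" using assms Side_disj \<open>T z2 z\<close> unfolding sep_def by auto
  moreover have "(z2, z) \<notin> sep T z w" using Side_refl unfolding sep_def by auto
  ultimately have "sep T z w \<subset> sep T y w" using sub by blast
  then show ?thesis unfolding dd_def using sep_finite psubset_card_mono by blast
qed

lemma Side_shift: assumes "T x z" "T z z2" "z2 \<noteq> x" "w \<in> Side T z x"
  shows "w \<in> Side T z2 z"
proof -
  have "(Rx T z x)\<^sup>*\<^sup>* w x" using assms(4) unfolding Side_def by simp
  then have "(Rx T z x)\<^sup>*\<^sup>* w x \<and> (Rx T z2 z)\<^sup>*\<^sup>* w x"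
  proof (induction rule: converse_rtranclp_induct)
    case base then show ?case by simp
  next
    case (step w w')
    have "w \<in> Side T z x" using converse_rtranclp_into_rtranclp[OF step(1) step(2)] unfolding Side_def by simp
    then have "w \<noteq> z" using Side_acyc[OF symT[OF assms(1)]] by blast
    have "w' \<in> Side T z x" using step(2) unfolding Side_def by simp
    then have "w' \<noteq> z" using Side_acyc[OF symT[OF assms(1)]] by blast
    have "Rx T z2 z w w'" using step(1) \<open>w \<noteq> z\<close> \<open>w' \<noteq> z\<close> unfolding Rx_def by blast
    then show ?case using step by (meson converse_rtranclp_into_rtranclp)
  qed
  moreover have "Rx T z2 z x z" using assms irrT unfolding Rx_def by blast
  ultimately show ?thesis unfolding Side_def using rtranclp.rtrancl_into_rtrancl[of "Rx T z2 z" w x z] by simp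
qed

end

lemma rtranclp_map: "R\<^sup>*\<^sup>* u v \<Longrightarrow> (\<And>a b. R a b \<Longrightarrow> S (f a) (f b)) \<Longrightarrow> S\<^sup>*\<^sup>* (f u) (f v)"
  by (induction rule: rtranclp_induct) (auto intro: rtranclp.rtrancl_into_rtrancl)

locale tree_action = tree T for T :: "'v \<Rightarrow> 'v \<Rightarrow> bool" +
  fixes G :: "('g, 'b) monoid_scheme" and \<phi> :: "'g \<Rightarrow> 'v \<Rightarrow> 'v"
  assumes grp: "group G"
    and act: "group_action G UNIV \<phi>"
    and aut: "\<forall>g\<in>carrier G. \<forall>u v. T u v \<longleftrightarrow> T (\<phi> g u) (\<phi> g v)"
begin

lemma phi_comp: "g \<in> carrier G \<Longrightarrow> h \<in> carrier G \<Longrightarrow> \<phi> (g \<otimes>\<^bsub>G\<^esub> h) x = \<phi> g (\<phi> h x)"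
  using group_action.composition_rule[OF act] by blast

lemma phi_one: "\<phi> \<one>\<^bsub>G\<^esub> x = x"
  using group_action.id_eq_one[OF act] by (metis restrict_apply' UNIV_I)

lemma phi_inv: "g \<in> carrier G \<Longrightarrow> \<phi> (inv\<^bsub>G\<^esub> g) (\<phi> g x) = x"
  using phi_comp[of "inv\<^bsub>G\<^esub> g" g x] phi_one group.l_inv[OF grp] group.inv_closed[OF grp] by metis

lemma phi_inv2: "g \<in> carrier G \<Longrightarrow> \<phi> g (\<phi> (inv\<^bsub>G\<^esub> g) x) = x"
  using phi_inv[of "inv\<^bsub>G\<^esub> g" x] group.inv_inv[OF grp] group.inv_closed[OF grp] by metis

lemma phi_inj: "g \<in> carrier G \<Longrightarrow> \<phi> g x = \<phi> g y \<longleftrightarrow> x = y"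
  using phi_inv by metis

lemma T_equiv: "g \<in> carrier G \<Longrightarrow> T (\<phi> g u) (\<phi> g v) \<longleftrightarrow> T u v"
  using aut by blast

lemma Rx_equiv: "g \<in> carrier G \<Longrightarrow> Rx T x y u v \<Longrightarrow> Rx T (\<phi> g x) (\<phi> g y) (\<phi> g u) (\<phi> g v)"
  unfolding Rx_def using T_equiv phi_inj by metis

lemma Side_equiv1: "g \<in> carrier G \<Longrightarrow> z \<in> Side T x y \<Longrightarrow> \<phi> g z \<in> Side T (\<phi> g x) (\<phi> g y)"
  unfolding Side_def using rtranclp_map[of "Rx T x y" z y "Rx T (\<phi> g x) (\<phi> g y)" "\<phi> g"] Rx_equiv
  by blast

lemma Side_equiv: assumes "g \<in> carrier G"
  shows "\<phi> g z \<in> Side T (\<phi> g x) (\<phi> g y) \<longleftrightarrow> z \<in> Side T x y"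
proof
  assume "\<phi> g z \<in> Side T (\<phi> g x) (\<phi> g y)"
  then have "\<phi> (inv\<^bsub>G\<^esub> g) (\<phi> g z) \<in> Side T (\<phi> (inv\<^bsub>G\<^esub> g) (\<phi> g x)) (\<phi> (inv\<^bsub>G\<^esub> g) (\<phi> g y))"
    using Side_equiv1 group.inv_closed[OF grp assms] by blast
  then show "z \<in> Side T x y" using phi_inv[OF assms] by simp
qed (rule Side_equiv1[OF assms])

lemma sep_equiv1: assumes "g \<in> carrier G" "(p, q) \<in> sep T x y"
  shows "(\<phi> g p, \<phi> g q) \<in> sep T (\<phi> g x) (\<phi> g y)"
  using assms unfolding sep_def by (auto simp: Side_equiv T_equiv)

lemma sep_equiv: assumes "g \<in> carrier G"
  shows "sep T (\<phi> g x) (\<phi> g y) = (\<lambda>(p, q). (\<phi> g p, \<phi> g q)) ` sep T x y"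
proof
  show "(\<lambda>(p, q). (\<phi> g p, \<phi> g q)) ` sep T x y \<subseteq> sep T (\<phi> g x) (\<phi> g y)"
    using sep_equiv1[OF assms] by auto
next
  show "sep T (\<phi> g x) (\<phi> g y) \<subseteq> (\<lambda>(p, q). (\<phi> g p, \<phi> g q)) ` sep T x y"
  proof
    fix e assume e: "e \<in> sep T (\<phi> g x) (\<phi> g y)"
    obtain p q where pq: "e = (p, q)" by fastforce
    have gi: "inv\<^bsub>G\<^esub> g \<in> carrier G" using group.inv_closed[OF grp assms] .
    have "(\<phi> (inv\<^bsub>G\<^esub> g) p, \<phi> (inv\<^bsub>G\<^esub> g) q) \<in> sep T x y"
      using sep_equiv1[OF gi, of p q "\<phi> g x" "\<phi> g y"] e pq phi_inv[OF assms] by simp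
    moreover have "e = (\<phi> g (\<phi> (inv\<^bsub>G\<^esub> g) p), \<phi> g (\<phi> (inv\<^bsub>G\<^esub> g) q))"
      using pq phi_inv2[OF assms] by simp
    ultimately show "e \<in> (\<lambda>(p, q). (\<phi> g p, \<phi> g q)) ` sep T x y" by force
  qed
qed

lemma dd_equiv: assumes "g \<in> carrier G" shows "dd T (\<phi> g x) (\<phi> g y) = dd T x y"
proof -
  have "inj_on (\<lambda>(p, q). (\<phi> g p, \<phi> g q)) (sep T x y)"
    using phi_inj[OF assms] by (auto simp: inj_on_def)
  then show ?thesis unfolding dd_def sep_equiv[OF assms] by (simp add: card_image)
qed

lemma fixed_point:
  assumes noinv: "without_inversions G \<phi> T"
    and bnd: "\<forall>g\<in>carrier G. dd T x0 (\<phi> g x0) \<le> R"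
  shows "\<exists>v. \<forall>g\<in>carrier G. \<phi> g v = v"
proof -
  define good where "good v R \<longleftrightarrow> (\<forall>g\<in>carrier G. dd T v (\<phi> g x0) \<le> R)" for v R
  have "good x0 R" using bnd unfolding good_def by simp
  then have ex: "\<exists>R v. good v R" by blast
  define R0 where "R0 = (LEAST R. \<exists>v. good v R)"
  have "\<exists>v. good v R0" unfolding R0_def by (rule LeastI_ex[OF ex])
  then obtain v0 where v0: "good v0 R0" by blast
  have least: "R0 \<le> R" if "good v R" for v R
  proof -
    have "\<exists>v. good v R" using that by blast
    then show ?thesis unfolding R0_def by (rule Least_le)
  qed
  have one: "\<one>\<^bsub>G\<^esub> \<in> carrier G" using monoid.one_closed[OF group.is_monoid[OF grp]] .
  have inv_cl: "g \<in> carrier G \<Longrightarrow> inv\<^bsub>G\<^esub> g \<in> carrier G" for g using group.inv_closed[OF grp] .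
  have mcl: "g \<in> carrier G \<Longrightarrow> h \<in> carrier G \<Longrightarrow> g \<otimes>\<^bsub>G\<^esub> h \<in> carrier G" for g h
    using monoid.m_closed[OF group.is_monoid[OF grp]] by blast
  have inv: "good v R0 \<Longrightarrow> g \<in> carrier G \<Longrightarrow> good (\<phi> g v) R0" for v g
  proof -
    assume gv: "good v R0" and g: "g \<in> carrier G"
    show "good (\<phi> g v) R0" unfolding good_def
    proof
      fix h assume h: "h \<in> carrier G"
      have "\<phi> h x0 = \<phi> g (\<phi> (inv\<^bsub>G\<^esub> g \<otimes>\<^bsub>G\<^esub> h) x0)"
        using phi_comp[OF inv_cl[OF g] h] phi_inv2[OF g] by simp
      then have "dd T (\<phi> g v) (\<phi> h x0) = dd T v (\<phi> (inv\<^bsub>G\<^esub> g \<otimes>\<^bsub>G\<^esub> h) x0)"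
        using dd_equiv[OF g] by simp
      also have "\<dots> \<le> R0" using gv mcl[OF inv_cl[OF g] h] unfolding good_def by blast
      finally show "dd T (\<phi> g v) (\<phi> h x0) \<le> R0" .
    qed
  qed
  have close: "good x R0 \<Longrightarrow> good y R0 \<Longrightarrow> dd T x y \<le> 1" for x y
  proof (rule ccontr)
    assume gx: "good x R0" and gy: "good y R0" and "\<not> dd T x y \<le> 1"
    then have d2: "dd T x y \<ge> 2" by simp
    then have "x \<noteq> y" using dd_zero by force
    then obtain z where z: "T x z" "y \<in> Side T x z" using toward by blast
    have "dd T x y = Suc (dd T z y)" using dd_Side z by blast
    then have "z \<noteq> y" using d2 dd_zero by force
    then obtain z2 where z2: "T z z2" "y \<in> Side T z z2" using toward by blast
    have "z2 \<noteq> x" using z z2 Side_disj[OF z(1), of y] by blast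
    have all: "dd T z (\<phi> h x0) < R0" if h: "h \<in> carrier G" for h
    proof (cases "\<phi> h x0 \<in> Side T x z")
      case True
      then have "dd T x (\<phi> h x0) = Suc (dd T z (\<phi> h x0))" using dd_Side z(1) by blast
      moreover have "dd T x (\<phi> h x0) \<le> R0" using gx h unfolding good_def by blast
      ultimately show ?thesis by simp
    next
      case False
      then have "\<phi> h x0 \<in> Side T z x" using Side_compl[OF z(1)] by blast
      then have "\<phi> h x0 \<in> Side T z2 z" using Side_shift z(1) z2(1) \<open>z2 \<noteq> x\<close> by blast
      then have "dd T z (\<phi> h x0) < dd T y (\<phi> h x0)" using dd_less z2 by blast
      moreover have "dd T y (\<phi> h x0) \<le> R0" using gy h unfolding good_def by blast
      ultimately show ?thesis by simp
    qed
    then have "R0 > 0" using one by fastforce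
    have "good z (R0 - 1)" unfolding good_def using all by fastforce
    then have "R0 \<le> R0 - 1" using least by blast
    then show False using \<open>R0 > 0\<close> by simp
  qed
  show ?thesis
  proof (rule ccontr)
    assume nf: "\<not> ?thesis"
    then obtain g where g: "g \<in> carrier G" "\<phi> g v0 \<noteq> v0" by blast
    define y where "y = \<phi> g v0"
    define y2 where "y2 = \<phi> g y"
    have gy: "good y R0" using inv v0 g unfolding y_def by blast
    have gy2: "good y2 R0" using inv gy g unfolding y2_def by blast
    have adj: "good a R0 \<Longrightarrow> good b R0 \<Longrightarrow> a \<noteq> b \<Longrightarrow> T a b" for a b
    proof -
      assume "good a R0" "good b R0" "a \<noteq> b"
      then have "dd T a b \<le> 1" "dd T a b \<noteq> 0" using close dd_zero by auto
      then have "dd T a b = 1" by simp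
      then show "T a b" using dd_one by blast
    qed
    have "y \<noteq> v0" using g unfolding y_def by simp
    have "y2 \<noteq> y" using g phi_inj[OF g(1)] unfolding y2_def y_def by simp
    show False
    proof (cases "y2 = v0")
      case True
      have "T v0 y" using adj[OF v0 gy] \<open>y \<noteq> v0\<close> by blast
      then show False using noinv g(1) True unfolding without_inversions_def y2_def y_def by blast
    next
      case False
      have t1: "T v0 y" using adj[OF v0 gy] \<open>y \<noteq> v0\<close> by blast
      have t2: "T y y2" using adj[OF gy gy2] \<open>y2 \<noteq> y\<close> by blast
      have t3: "T y2 v0" using adj[OF gy2 v0] False by blast
      have "rpath T [v0, y, y2]" using t1 t2 by simp
      moreover have "distinct [v0, y, y2]" using \<open>y \<noteq> v0\<close> \<open>y2 \<noteq> y\<close> False by auto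
      ultimately show False using acyc[of "[v0, y, y2]"] t3 by simp
    qed
  qed
qed

end

lemma hall_finite:
  fixes N :: "'a \<Rightarrow> 'b set"
  assumes "finite L" "\<forall>l\<in>L. finite (N l)" "\<forall>F\<subseteq>L. card F \<le> card (\<Union>(N ` F))"
  shows "\<exists>f. inj_on f L \<and> (\<forall>l\<in>L. f l \<in> N l)"
  using assms
proof (induction "card L" arbitrary: L N rule: less_induct)
  case less
  note finL = less.prems(1) and finN = less.prems(2) and hall = less.prems(3)
  have finU: "finite (\<Union>(N ` F))" if "F \<subseteq> L" for F
    using that finL finN by (meson finite_UN_I finite_subset subsetD)
  show ?case
  proof (cases "L = {}")
    case True then show ?thesis by auto
  next
    case False
    show ?thesis
    proof (cases "\<exists>F. F \<subseteq> L \<and> F \<noteq> {} \<and> F \<noteq> L \<and> card (\<Union>(N ` F)) = card F")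
      case True
      then obtain F where F: "F \<subseteq> L" "F \<noteq> {}" "F \<noteq> L" "card (\<Union>(N ` F)) = card F" by blast
      have finF: "finite F" using F(1) finL finite_subset by blast
      have "card F < card L" using F finL by (meson psubsetI psubset_card_mono)
      then obtain f1 where f1: "inj_on f1 F" "\<forall>l\<in>F. f1 l \<in> N l"
        using less.hyps[of F N] finF finN hall F(1) by (meson order_trans subsetD)
      define L' where "L' = L - F"
      define N' where "N' x = N x - \<Union>(N ` F)" for x
      have "card L' < card L" unfolding L'_def using F finL
        by (metis Diff_disjoint Diff_subset Int_absorb2 psubsetI psubset_card_mono)
      moreover have "finite L'" unfolding L'_def using finL by simp
      moreover have "\<forall>l\<in>L'. finite (N' l)" unfolding N'_def L'_def using finN by simp
      moreover have "\<forall>F'\<subseteq>L'. card F' \<le> card (\<Union>(N' ` F'))"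
      proof (intro allI impI)
        fix F' assume F': "F' \<subseteq> L'"
        have eq: "\<Union>(N' ` F') = \<Union>(N ` (F \<union> F')) - \<Union>(N ` F)" unfolding N'_def by auto
        have sub: "\<Union>(N ` F) \<subseteq> \<Union>(N ` (F \<union> F'))" by auto
        have FF': "F \<union> F' \<subseteq> L" using F' F(1) unfolding L'_def by auto
        have "card (\<Union>(N' ` F')) = card (\<Union>(N ` (F \<union> F'))) - card (\<Union>(N ` F))"
          unfolding eq using card_Diff_subset[OF finU[OF F(1)] sub] .
        moreover have "card (F \<union> F') \<le> card (\<Union>(N ` (F \<union> F')))" using hall FF' by blast
        moreover have "card (F \<union> F') = card F + card F'"
        proof -
          have "finite F'" using F' finL unfolding L'_def by (meson finite_Diff finite_subset)
          moreover have "F \<inter> F' = {}" using F' unfolding L'_def by blast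
          ultimately show ?thesis using card_Un_disjoint[OF finF] by blast
        qed
        ultimately show "card F' \<le> card (\<Union>(N' ` F'))" using F(4) by linarith
      qed
      ultimately obtain f2 where f2: "inj_on f2 L'" "\<forall>l\<in>L'. f2 l \<in> N' l"
        using less.hyps[of L' N'] by blast
      define f where "f x = (if x \<in> F then f1 x else f2 x)" for x
      have "\<forall>l\<in>L. f l \<in> N l" using f1 f2 unfolding f_def L'_def N'_def by auto
      moreover have "inj_on f L"
      proof (rule inj_onI)
        fix x y assume xy: "x \<in> L" "y \<in> L" "f x = f y"
        show "x = y"
        proof (cases "x \<in> F"; cases "y \<in> F")
          assume "x \<in> F" "y \<in> F" then show ?thesis using xy f1 unfolding f_def by (auto dest: inj_onD)
        next
          assume "x \<notin> F" "y \<notin> F" then show ?thesis using xy f2 unfolding f_def L'_def by (auto dest: inj_onD)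
        next
          assume "x \<in> F" "y \<notin> F"
          then have "f x \<in> \<Union>(N ` F)" "f y \<notin> \<Union>(N ` F)"
            using f1 f2 xy(1,2) unfolding f_def L'_def N'_def by auto
          then show ?thesis using xy by simp
        next
          assume "x \<notin> F" "y \<in> F"
          then have "f y \<in> \<Union>(N ` F)" "f x \<notin> \<Union>(N ` F)"
            using f1 f2 xy(1,2) unfolding f_def L'_def N'_def by auto
          then show ?thesis using xy by simp
        qed
      qed
      ultimately show ?thesis by blast
    next
      case False
      then have strict: "card F < card (\<Union>(N ` F))" if "F \<subseteq> L" "F \<noteq> {}" "F \<noteq> L" for F
        using hall that by (metis le_neq_implies_less)
      obtain l where l: "l \<in> L" using \<open>L \<noteq> {}\<close> by blast
      have "card {l} \<le> card (\<Union>(N ` {l}))" using hall l by blast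
      then have "card {l} \<le> card (N l)" by simp
      then have "N l \<noteq> {}" by auto
      then obtain y where y: "y \<in> N l" by blast
      define L' where "L' = L - {l}"
      define N' where "N' x = N x - {y}" for x
      have "card L' < card L" unfolding L'_def using card_Diff1_less[OF finL l] .
      moreover have "finite L'" unfolding L'_def using finL by simp
      moreover have "\<forall>l\<in>L'. finite (N' l)" unfolding N'_def L'_def using finN by simp
      moreover have "\<forall>F'\<subseteq>L'. card F' \<le> card (\<Union>(N' ` F'))"
      proof (intro allI impI)
        fix F' assume F': "F' \<subseteq> L'"
        show "card F' \<le> card (\<Union>(N' ` F'))"
        proof (cases "F' = {}")
          case True then show ?thesis by simp
        next
          case False
          have "F' \<subseteq> L" "F' \<noteq> L" using F' l unfolding L'_def by auto
          then have "card F' < card (\<Union>(N ` F'))" using strict False by blast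
          moreover have "\<Union>(N' ` F') = \<Union>(N ` F') - {y}" unfolding N'_def by auto
          moreover have "card (\<Union>(N ` F')) - 1 \<le> card (\<Union>(N ` F') - {y})"
            using diff_card_le_card_Diff[of "{y}" "\<Union>(N ` F')"] by simp
          ultimately show ?thesis by simp
        qed
      qed
      ultimately obtain f' where f': "inj_on f' L'" "\<forall>x\<in>L'. f' x \<in> N' x"
        using less.hyps[of L' N'] by blast
      define f where "f = f'(l := y)"
      have "\<forall>x\<in>L. f x \<in> N x" using f' y unfolding f_def L'_def N'_def by auto
      moreover have "inj_on f L"
      proof (rule inj_onI)
        fix a b assume ab: "a \<in> L" "b \<in> L" "f a = f b"
        show "a = b"
        proof (cases "a = l"; cases "b = l")
          assume "a \<noteq> l" "b \<noteq> l" then show ?thesis using ab f' unfolding f_def L'_def by (auto dest: inj_onD)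
        next
          assume "a = l" "b \<noteq> l"
          then have "f b \<noteq> y" using f' ab unfolding f_def L'_def N'_def by auto
          then show ?thesis using ab \<open>a = l\<close> unfolding f_def by simp
        next
          assume "a \<noteq> l" "b = l"
          then have "f a \<noteq> y" using f' ab unfolding f_def L'_def N'_def by auto
          then show ?thesis using ab \<open>b = l\<close> unfolding f_def by simp
        qed simp
      qed
      ultimately show ?thesis by blast
    qed
  qed
qed

lemma hall_countable:
  fixes N :: "'a \<Rightarrow> 'b set"
  assumes cL: "countable L" and finN: "\<forall>l\<in>L. finite (N l)"
    and hall: "\<forall>F\<subseteq>L. finite F \<longrightarrow> card F \<le> card (\<Union>(N ` F))"
  shows "\<exists>f. inj_on f L \<and> (\<forall>l\<in>L. f l \<in> N l)"
proof (cases "finite L")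
  case True
  then show ?thesis using hall_finite[OF True finN] hall by (meson finite_subset)
next
  case False
  define e where "e = from_nat_into L"
  have e: "bij_betw e UNIV L" unfolding e_def using bij_betw_from_nat_into[OF cL False] .
  define Ln where "Ln n = e ` {..n}" for n
  have LnL: "Ln n \<subseteq> L" for n using e unfolding Ln_def bij_betw_def by auto
  have "\<exists>f. inj_on f (Ln n) \<and> (\<forall>l\<in>Ln n. f l \<in> N l)" for n
  proof (rule hall_finite)
    show "finite (Ln n)" unfolding Ln_def by simp
    show "\<forall>l\<in>Ln n. finite (N l)" using finN LnL by blast
    show "\<forall>F\<subseteq>Ln n. card F \<le> card (\<Union>(N ` F))"
      using hall LnL by (metis Ln_def finite_atMost finite_imageI finite_subset order_trans)
  qed
  then obtain F where F: "\<And>n. inj_on (F n) (Ln n)" "\<And>n l. l \<in> Ln n \<Longrightarrow> F n l \<in> N l" by metis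
  have eLn: "i \<le> n \<Longrightarrow> e i \<in> Ln n" for i n unfolding Ln_def by simp
  define good where "good i I c \<longleftrightarrow> infinite {n\<in>I. i \<le> n \<and> F n (e i) = c}" for i I c
  define nxt where "nxt i I = {n\<in>I. i \<le> n \<and> F n (e i) = (SOME c. good i I c)}" for i I
  define Is where "Is = rec_nat UNIV nxt"
  have Is0: "Is 0 = UNIV" unfolding Is_def by simp
  have IsS: "Is (Suc i) = nxt i (Is i)" for i unfolding Is_def by simp
  have exgood: "\<exists>c. good i I c" if "infinite I" for i I
  proof -
    let ?I = "{n\<in>I. i \<le> n}"
    have "?I = I - {..<i}" by auto
    then have inf: "infinite ?I" using that by simp
    have "(\<lambda>n. F n (e i)) ` ?I \<subseteq> N (e i)" using F(2) eLn by auto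
    moreover have "finite (N (e i))" using finN LnL eLn by blast
    ultimately have "finite ((\<lambda>n. F n (e i)) ` ?I)" using finite_subset by blast
    then obtain n0 where "n0 \<in> ?I" "infinite {n\<in>?I. F n (e i) = F n0 (e i)}"
      using pigeonhole_infinite[OF inf] by blast
    then have "good i I (F n0 (e i))" unfolding good_def by (simp add: conj_assoc)
    then show ?thesis by blast
  qed
  have infIs: "infinite (Is i)" for i
  proof (induction i)
    case 0 then show ?case using Is0 by simp
  next
    case (Suc i)
    have "good i (Is i) (SOME c. good i (Is i) c)" using exgood[OF Suc] by (rule someI_ex)
    then show ?case unfolding IsS nxt_def good_def by simp
  qed
  have dec: "Is j \<subseteq> Is i" if "i \<le> j" for i j
    using lift_Suc_antimono_le[of Is i j] that unfolding IsS nxt_def by blast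
  define c where "c i = (SOME c. good i (Is i) c)" for i
  have key: "n \<in> Is (Suc i) \<Longrightarrow> i \<le> n \<and> F n (e i) = c i" for n i
    unfolding IsS nxt_def c_def by simp
  have ne: "\<exists>n. n \<in> Is i" for i using infIs[of i] by (metis ex_in_conv finite.emptyI)
  define f where "f l = c (inv_into UNIV e l)" for l
  have fe: "f (e i) = c i" for i
    unfolding f_def using e by (simp add: bij_betw_def inv_into_f_f)
  have "\<forall>l\<in>L. f l \<in> N l"
  proof
    fix l assume "l \<in> L"
    then obtain i where i: "l = e i" using e unfolding bij_betw_def by auto
    obtain n where n: "n \<in> Is (Suc i)" using ne by blast
    then have "i \<le> n" "F n (e i) = c i" using key by auto
    then show "f l \<in> N l" using F(2)[OF eLn[OF \<open>i \<le> n\<close>]] fe i by simp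
  qed
  moreover have "inj_on f L"
  proof (rule inj_onI)
    fix l1 l2 assume l: "l1 \<in> L" "l2 \<in> L" "f l1 = f l2"
    obtain i j where ij: "l1 = e i" "l2 = e j" using e l unfolding bij_betw_def by auto
    show "l1 = l2"
    proof (rule ccontr)
      assume neq: "l1 \<noteq> l2"
      then have "i \<noteq> j" using ij by blast
      obtain n where n: "n \<in> Is (Suc (max i j))" using ne by blast
      have "n \<in> Is (Suc i)" "n \<in> Is (Suc j)" using n dec[of "Suc i" "Suc (max i j)"] dec[of "Suc j" "Suc (max i j)"] by auto
      then have "i \<le> n" "F n (e i) = c i" "j \<le> n" "F n (e j) = c j" using key by auto
      moreover have "c i = c j" using l(3) ij fe by simp
      ultimately have "F n (e i) = F n (e j)" by simp
      then have "e i = e j" using F(1)[of n] eLn \<open>i \<le> n\<close> \<open>j \<le> n\<close> by (meson inj_onD)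
      then show False using neq ij by simp
    qed
  qed
  ultimately show ?thesis by blast
qed

locale inv_mean =
  fixes G :: "('g, 'b) monoid_scheme" and H :: "'g set" and \<mu> :: "'g set \<Rightarrow> real"
  assumes grp: "group G" and sub: "subgroup H G"
    and m1: "\<mu> H = 1"
    and nonneg: "\<forall>A. A \<subseteq> H \<longrightarrow> \<mu> A \<ge> 0"
    and add: "\<forall>A B. A \<subseteq> H \<longrightarrow> B \<subseteq> H \<longrightarrow> A \<inter> B = {} \<longrightarrow> \<mu> (A \<union> B) = \<mu> A + \<mu> B"
    and linv: "\<forall>g A. g \<in> H \<longrightarrow> A \<subseteq> H \<longrightarrow> \<mu> ((\<lambda>x. g \<otimes>\<^bsub>G\<^esub> x) ` A) = \<mu> A"
begin

lemma mu_empty: "\<mu> {} = 0"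
  using add[rule_format, of "{}" "{}"] by simp

lemma mu_mono: "A \<subseteq> B \<Longrightarrow> B \<subseteq> H \<Longrightarrow> \<mu> A \<le> \<mu> B"
proof -
  assume AB: "A \<subseteq> B" "B \<subseteq> H"
  have "B = A \<union> (B - A)" using AB by blast
  moreover have "\<mu> (A \<union> (B - A)) = \<mu> A + \<mu> (B - A)"
    using add[rule_format, of A "B - A"] AB by auto
  ultimately have "\<mu> B = \<mu> A + \<mu> (B - A)" by simp
  moreover have "\<mu> (B - A) \<ge> 0" using nonneg AB by blast
  ultimately show ?thesis by simp
qed

lemma mu_UN:
  assumes "finite J" "\<forall>j\<in>J. B j \<subseteq> H" "\<forall>i\<in>J. \<forall>j\<in>J. i \<noteq> j \<longrightarrow> B i \<inter> B j = {}"
  shows "\<mu> (\<Union>j\<in>J. B j) = (\<Sum>j\<in>J. \<mu> (B j))"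
  using assms
proof (induction J rule: finite_induct)
  case empty then show ?case using mu_empty by simp
next
  case (insert j J)
  have "(\<Union>i\<in>insert j J. B i) = B j \<union> (\<Union>i\<in>J. B i)" by simp
  moreover have "B j \<inter> (\<Union>i\<in>J. B i) = {}"
  proof -
    have "\<forall>i\<in>J. B j \<inter> B i = {}" using insert.prems(2) insert.hyps(2) by (metis insertCI)
    then show ?thesis by blast
  qed
  moreover have "B j \<subseteq> H" "(\<Union>i\<in>J. B i) \<subseteq> H" using insert by auto
  ultimately have "\<mu> (\<Union>i\<in>insert j J. B i) = \<mu> (B j) + \<mu> (\<Union>i\<in>J. B i)" using add by simp
  also have "\<dots> = \<mu> (B j) + (\<Sum>i\<in>J. \<mu> (B i))" using insert by simp
  finally show ?case using insert by simp
qed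

lemma mu_shift_image:
  assumes K: "K \<subseteq> H" "finite K"
    and f: "inj_on f H" "\<forall>x\<in>H. f x \<in> (\<lambda>k. k \<otimes>\<^bsub>G\<^esub> x) ` K"
  shows "\<mu> (f ` H) = 1"
proof -
  interpret G: group G by (rule grp)
  define kf where "kf x = (SOME k. k \<in> K \<and> f x = k \<otimes>\<^bsub>G\<^esub> x)" for x
  have kf: "kf x \<in> K \<and> f x = kf x \<otimes>\<^bsub>G\<^esub> x" if "x \<in> H" for x
  proof -
    have "\<exists>k. k \<in> K \<and> f x = k \<otimes>\<^bsub>G\<^esub> x" using f(2) that by blast
    then show ?thesis unfolding kf_def by (rule someI_ex)
  qed
  define X where "X k = {x\<in>H. kf x = k}" for k
  have XH: "X k \<subseteq> H" for k unfolding X_def by blast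
  have Hcov: "H = (\<Union>k\<in>K. X k)"
  proof (intro equalityI subsetI)
    fix x assume "x \<in> H"
    then have "kf x \<in> K" using kf by blast
    then show "x \<in> (\<Union>k\<in>K. X k)" unfolding X_def using \<open>x \<in> H\<close> by blast
  next
    fix x assume "x \<in> (\<Union>k\<in>K. X k)"
    then show "x \<in> H" unfolding X_def by blast
  qed
  have Xdisj: "\<forall>i\<in>K. \<forall>j\<in>K. i \<noteq> j \<longrightarrow> X i \<inter> X j = {}" unfolding X_def by blast
  have fX: "f ` X k = (\<lambda>x. k \<otimes>\<^bsub>G\<^esub> x) ` X k" for k
  proof (rule image_cong)
    show "\<And>x. x \<in> X k \<Longrightarrow> f x = k \<otimes>\<^bsub>G\<^esub> x" unfolding X_def using kf by blast
  qed simp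
  have mulH: "a \<in> H \<Longrightarrow> b \<in> H \<Longrightarrow> a \<otimes>\<^bsub>G\<^esub> b \<in> H" for a b using subgroup.m_closed[OF sub] by blast
  have fXH: "f ` X k \<subseteq> H" for k
  proof (rule image_subsetI)
    fix x assume x: "x \<in> X k"
    then have xH: "x \<in> H" using XH by blast
    then have "kf x \<in> K" "f x = kf x \<otimes>\<^bsub>G\<^esub> x" using kf by auto
    then show "f x \<in> H" using mulH[of "kf x" x] K(1) xH by auto
  qed
  have "f ` H = f ` (\<Union>k\<in>K. X k)" using Hcov by (rule arg_cong)
  then have "f ` H = (\<Union>k\<in>K. f ` X k)" by (simp only: image_UN)
  moreover have "\<forall>i\<in>K. \<forall>j\<in>K. i \<noteq> j \<longrightarrow> f ` X i \<inter> f ` X j = {}"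
  proof (intro ballI impI)
    fix i j assume "i \<in> K" "j \<in> K" "i \<noteq> j"
    then have "X i \<inter> X j = {}" using Xdisj by blast
    then show "f ` X i \<inter> f ` X j = {}" using f(1) XH inj_on_image_Int[OF f(1), of "X i" "X j"] by simp
  qed
  ultimately have "\<mu> (f ` H) = (\<Sum>k\<in>K. \<mu> (f ` X k))"
    using mu_UN[OF K(2), of "\<lambda>k. f ` X k"] fXH by simp
  also have "\<dots> = (\<Sum>k\<in>K. \<mu> (X k))"
  proof (rule sum.cong)
    fix k assume "k \<in> K"
    then show "\<mu> (f ` X k) = \<mu> (X k)" using fX[of k] linv K(1) XH[of k] by auto
  qed simp
  also have "\<dots> = \<mu> (\<Union>k\<in>K. X k)" using mu_UN[OF K(2), of X] XH Xdisj by simp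
  also have "\<dots> = 1" using m1 by (simp only: Hcov[symmetric])
  finally show ?thesis .
qed

lemma folner:
  assumes cH: "countable H" and K: "K \<subseteq> H" "finite K"
  shows "\<exists>A. A \<subseteq> H \<and> finite A \<and> A \<noteq> {} \<and>
    card ((\<lambda>(a, k). a \<otimes>\<^bsub>G\<^esub> k) ` (A \<times> K)) \<le> 2 * card A"
proof (rule ccontr)
  interpret G: group G by (rule grp)
  assume neg: "\<not> ?thesis"
  have hyp: "2 * card A < card ((\<lambda>(a, k). a \<otimes>\<^bsub>G\<^esub> k) ` (A \<times> K))"
    if "A \<subseteq> H" "finite A" "A \<noteq> {}" for A
  proof -
    have "\<not> (card ((\<lambda>(a, k). a \<otimes>\<^bsub>G\<^esub> k) ` (A \<times> K)) \<le> 2 * card A)"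
      using neg that by blast
    then show ?thesis by simp
  qed
  have HG: "H \<subseteq> carrier G" using subgroup.subset[OF sub] by blast
  have mulH: "a \<in> H \<Longrightarrow> b \<in> H \<Longrightarrow> a \<otimes>\<^bsub>G\<^esub> b \<in> H" for a b using subgroup.m_closed[OF sub] by blast
  have invH: "a \<in> H \<Longrightarrow> inv\<^bsub>G\<^esub> a \<in> H" for a using subgroup.m_inv_closed[OF sub] by blast
  define K' where "K' = (\<lambda>k. inv\<^bsub>G\<^esub> k) ` K"
  have K'H: "K' \<subseteq> H" unfolding K'_def using K invH by blast
  have finK': "finite K'" unfolding K'_def using K by simp
  define L where "L = H \<times> (UNIV :: bool set)"
  define N where "N l = (\<lambda>k. k \<otimes>\<^bsub>G\<^esub> fst l) ` K'" for l :: "'g \<times> bool"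
  have "\<exists>f. inj_on f L \<and> (\<forall>l\<in>L. f l \<in> N l)"
  proof (rule hall_countable)
    show "countable L" unfolding L_def using cH by simp
    show "\<forall>l\<in>L. finite (N l)" unfolding N_def using finK' by simp
    show "\<forall>F\<subseteq>L. finite F \<longrightarrow> card F \<le> card (\<Union>(N ` F))"
    proof (intro allI impI)
      fix F assume F: "F \<subseteq> L" "finite F"
      define B where "B = fst ` F"
      have BH: "B \<subseteq> H" using F unfolding B_def L_def by auto
      have finB: "finite B" using F unfolding B_def by simp
      have "F \<subseteq> B \<times> (UNIV :: bool set)" unfolding B_def by force
      then have cF: "card F \<le> 2 * card B"
        using card_mono[of "B \<times> (UNIV :: bool set)" F] finB by (simp add: card_cartesian_product)
      define KB where "KB = (\<lambda>(k, b). k \<otimes>\<^bsub>G\<^esub> b) ` (K' \<times> B)"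
      have UN: "\<Union>(N ` F) = KB" unfolding N_def KB_def B_def by force
      show "card F \<le> card (\<Union>(N ` F))"
      proof (cases "B = {}")
        case True then show ?thesis using cF by simp
      next
        case False
        define A where "A = (\<lambda>b. inv\<^bsub>G\<^esub> b) ` B"
        have injinv: "inj_on (\<lambda>b. inv\<^bsub>G\<^esub> b) (carrier G)"
          by (rule inj_onI) (metis G.inv_inv)
        have cA: "card A = card B" unfolding A_def
          using card_image inj_on_subset[OF injinv] BH HG by (metis order_trans)
        have AH: "A \<subseteq> H" unfolding A_def using BH invH by blast
        have "(\<lambda>(a, k). a \<otimes>\<^bsub>G\<^esub> k) ` (A \<times> K) = (\<lambda>b. inv\<^bsub>G\<^esub> b) ` KB"
        proof (intro equalityI subsetI)
          fix z assume "z \<in> (\<lambda>(a, k). a \<otimes>\<^bsub>G\<^esub> k) ` (A \<times> K)"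
          then obtain b k where bk: "b \<in> B" "k \<in> K" "z = inv\<^bsub>G\<^esub> b \<otimes>\<^bsub>G\<^esub> k" unfolding A_def by auto
          have bG: "b \<in> carrier G" "k \<in> carrier G" using bk BH K HG by auto
          have "z = inv\<^bsub>G\<^esub> (inv\<^bsub>G\<^esub> k \<otimes>\<^bsub>G\<^esub> b)" using bk bG by (simp add: G.inv_mult_group)
          moreover have "inv\<^bsub>G\<^esub> k \<otimes>\<^bsub>G\<^esub> b \<in> KB" unfolding KB_def K'_def using bk by force
          ultimately show "z \<in> (\<lambda>b. inv\<^bsub>G\<^esub> b) ` KB" by blast
        next
          fix z assume "z \<in> (\<lambda>b. inv\<^bsub>G\<^esub> b) ` KB"
          then obtain b k where bk: "b \<in> B" "k \<in> K" "z = inv\<^bsub>G\<^esub> (inv\<^bsub>G\<^esub> k \<otimes>\<^bsub>G\<^esub> b)"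
            unfolding KB_def K'_def by auto
          have bG: "b \<in> carrier G" "k \<in> carrier G" using bk BH K HG by auto
          have "z = inv\<^bsub>G\<^esub> b \<otimes>\<^bsub>G\<^esub> k" using bk bG by (simp add: G.inv_mult_group)
          then show "z \<in> (\<lambda>(a, k). a \<otimes>\<^bsub>G\<^esub> k) ` (A \<times> K)" unfolding A_def using bk by force
        qed
        moreover have "KB \<subseteq> carrier G" unfolding KB_def using K'H BH HG G.m_closed by auto
        ultimately have "card ((\<lambda>(a, k). a \<otimes>\<^bsub>G\<^esub> k) ` (A \<times> K)) = card KB"
          using card_image inj_on_subset[OF injinv] by metis
        moreover have "2 * card A < card ((\<lambda>(a, k). a \<otimes>\<^bsub>G\<^esub> k) ` (A \<times> K))"
          using hyp AH finB False unfolding A_def by simp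
        ultimately show ?thesis using cF cA UN by simp
      qed
    qed
  qed
  then obtain f where f: "inj_on f L" "\<forall>l\<in>L. f l \<in> N l" by blast
  define f1 where "f1 x = f (x, True)" for x
  define f0 where "f0 x = f (x, False)" for x
  have img: "\<mu> (g ` H) = 1" if "g = f1 \<or> g = f0" for g
  proof (rule mu_shift_image[OF K'H finK'])
    show "inj_on g H" using that f(1) unfolding f1_def f0_def L_def inj_on_def by auto
    show "\<forall>x\<in>H. g x \<in> (\<lambda>k. k \<otimes>\<^bsub>G\<^esub> x) ` K'" using that f(2) unfolding f1_def f0_def L_def N_def by auto
  qed
  have gin: "\<forall>x\<in>H. g x \<in> (\<lambda>k. k \<otimes>\<^bsub>G\<^esub> x) ` K'" if "g = f1 \<or> g = f0" for g
    using that f(2) unfolding f1_def f0_def L_def N_def by auto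
  have sub1: "g ` H \<subseteq> H" if g01: "g = f1 \<or> g = f0" for g
  proof (rule image_subsetI)
    fix x assume x: "x \<in> H"
    then obtain k where k: "k \<in> K'" "g x = k \<otimes>\<^bsub>G\<^esub> x" using gin[OF g01] by blast
    then show "g x \<in> H" using K'H mulH x by auto
  qed
  have disj: "f1 ` H \<inter> f0 ` H = {}"
    using f(1) unfolding f1_def f0_def L_def inj_on_def by auto
  have s1: "f1 ` H \<subseteq> H" and s0: "f0 ` H \<subseteq> H" using sub1 by auto
  have i1: "\<mu> (f1 ` H) = 1" and i0: "\<mu> (f0 ` H) = 1" using img by auto
  have "\<mu> (f1 ` H \<union> f0 ` H) = \<mu> (f1 ` H) + \<mu> (f0 ` H)"
    using add[rule_format, OF s1 s0 disj] .
  then have "\<mu> (f1 ` H \<union> f0 ` H) = 2" using i1 i0 by simp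
  moreover have "\<mu> (f1 ` H \<union> f0 ` H) \<le> \<mu> H"
    using mu_mono[of "f1 ` H \<union> f0 ` H" H] s1 s0 by blast
  ultimately show False using m1 by simp
qed

end

definition wprod :: "('g, 'b) monoid_scheme \<Rightarrow> 'g list \<Rightarrow> 'g" where
  "wprod G xs = foldr (\<lambda>s acc. s \<otimes>\<^bsub>G\<^esub> acc) xs \<one>\<^bsub>G\<^esub>"

lemma wprod_Nil[simp]: "wprod G [] = \<one>\<^bsub>G\<^esub>" unfolding wprod_def by simp
lemma wprod_Cons[simp]: "wprod G (x # xs) = x \<otimes>\<^bsub>G\<^esub> wprod G xs" unfolding wprod_def by simp

lemma rpath_first_exit:
  "rpath R ws \<Longrightarrow> P (hd ws) \<Longrightarrow> \<not> P (last ws) \<Longrightarrow> \<exists>j. Suc j < length ws \<and> P (ws ! j) \<and> \<not> P (ws ! Suc j)"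
proof (induction R ws rule: rpath.induct)
  case (3 R x y xs)
  show ?case
  proof (cases "P y")
    case True
    then obtain j where "Suc j < length (y # xs)" "P ((y # xs) ! j)" "\<not> P ((y # xs) ! Suc j)"
      using 3 by auto
    then show ?thesis by (intro exI[of _ "Suc j"]) auto
  next
    case False
    then show ?thesis using 3 by (intro exI[of _ 0]) auto
  qed
qed auto

context group
begin

lemma wprod_closed: "set xs \<subseteq> carrier G \<Longrightarrow> wprod G xs \<in> carrier G"
  by (induction xs) auto

lemma wprod_append: "set xs \<subseteq> carrier G \<Longrightarrow> set ys \<subseteq> carrier G \<Longrightarrow>
    wprod G (xs @ ys) = wprod G xs \<otimes> wprod G ys"
  by (induction xs) (auto simp: m_assoc wprod_closed)

lemma gen_words:
  assumes S: "S \<subseteq> carrier G" "\<forall>s\<in>S. inv s \<in> S"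
  shows "generate G S \<subseteq> wprod G ` {xs. set xs \<subseteq> S}"
proof
  fix h assume "h \<in> generate G S"
  then show "h \<in> wprod G ` {xs. set xs \<subseteq> S}"
  proof (induction rule: generate.induct)
    case one
    then show ?case by (intro image_eqI[of _ _ "[]"]) auto
  next
    case (incl h)
    then show ?case using S by (intro image_eqI[of _ _ "[h]"]) auto
  next
    case (inv h)
    then show ?case using S by (intro image_eqI[of _ _ "[inv h]"]) auto
  next
    case (eng h1 h2)
    then obtain xs ys where "set xs \<subseteq> S" "h1 = wprod G xs" "set ys \<subseteq> S" "h2 = wprod G ys" by auto
    then show ?case using S wprod_append[of xs ys] by (intro image_eqI[of _ _ "xs @ ys"]) auto
  qed
qed

lemma cayley_walk:
  assumes S: "S \<subseteq> carrier G" and xs: "set xs \<subseteq> S" and u: "u \<in> carrier G"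
  shows "\<exists>ws. rpath (cayley_adj G S) ws \<and> hd ws = u \<and> last ws = u \<otimes> wprod G xs \<and> length ws = Suc (length xs)"
  using xs u
proof (induction xs arbitrary: u)
  case Nil then show ?case by (intro exI[of _ "[u]"]) auto
next
  case (Cons s xs)
  have s: "s \<in> carrier G" "s \<in> S" using Cons.prems S by auto
  then have us: "u \<otimes> s \<in> carrier G" using Cons.prems by simp
  obtain ws where ws: "rpath (cayley_adj G S) ws" "hd ws = u \<otimes> s" "last ws = u \<otimes> s \<otimes> wprod G xs"
      "length ws = Suc (length xs)"
    using Cons.IH[OF _ us] Cons.prems by auto
  have "ws \<noteq> []" using ws(1) by auto
  have adj: "cayley_adj G S u (u \<otimes> s)" unfolding cayley_adj_def using Cons.prems s us by auto
  have "u \<otimes> s \<otimes> wprod G xs = u \<otimes> wprod G (s # xs)"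
    using s Cons.prems S by (simp add: m_assoc wprod_closed subset_eq)
  then show ?case using ws adj \<open>ws \<noteq> []\<close> by (intro exI[of _ "u # ws"]) (auto simp: rpath_Cons)
qed

lemma cayley_walk_pos:
  assumes S: "S \<subseteq> carrier G"
  shows "rpath (cayley_adj G S) ws \<Longrightarrow> j < length ws \<Longrightarrow> hd ws \<in> carrier G \<Longrightarrow>
    \<exists>xs. set xs \<subseteq> S \<and> length xs = j \<and> ws ! j = hd ws \<otimes> wprod G xs"
proof (induction "cayley_adj G S" ws arbitrary: j rule: rpath.induct)
  case (2 x)
  then show ?case by (intro exI[of _ "[]"]) auto
next
  case (3 x y xs)
  have adj: "cayley_adj G S x y" using 3 by simp
  then obtain s where s: "s \<in> S" "y = x \<otimes> s" "x \<in> carrier G" unfolding cayley_adj_def by blast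
  show ?case
  proof (cases j)
    case 0 then show ?thesis using s by (intro exI[of _ "[]"]) auto
  next
    case (Suc j')
    have "y \<in> carrier G" using adj unfolding cayley_adj_def by blast
    then obtain zs where zs: "set zs \<subseteq> S" "length zs = j'" "(y # xs) ! j' = y \<otimes> wprod G zs"
      using 3 Suc by auto
    have "x \<otimes> s \<otimes> wprod G zs = x \<otimes> wprod G (s # zs)"
      using s zs S by (simp add: m_assoc wprod_closed subset_eq)
    then show ?thesis using zs s Suc by (intro exI[of _ "s # zs"]) auto
  qed
qed auto

end

lemma walk_iff: "walk V E xs \<longleftrightarrow> rpath E xs \<and> set xs \<subseteq> V"
  unfolding walk_def using rpath_steps steps_rpath rpath_nonempty by blast

locale main_ctx = tree_action T G \<phi> for T :: "'v \<Rightarrow> 'v \<Rightarrow> bool" and G :: "('g, 'b) monoid_scheme" and \<phi> +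
  fixes S :: "'g set" and a b x0 :: 'v and \<mu> :: "'g set \<Rightarrow> real"
  assumes noinv: "without_inversions G \<phi> T"
    and Sfin: "finite S" and Ssub: "S \<subseteq> carrier G" and Ssym: "\<forall>s\<in>S. inv\<^bsub>G\<^esub> s \<in> S"
    and Sgen: "generate G S = carrier G"
    and ab: "T a b"
    and mean: "inv_mean G {g \<in> carrier G. \<phi> g a = a \<and> \<phi> g b = b} \<mu>"
    and longsep: "\<forall>M. \<exists>g\<in>carrier G. M \<le> card (sep T x0 (\<phi> g x0) \<inter> {e. \<exists>c\<in>carrier G. e = (\<phi> c a, \<phi> c b)})"
begin

definition "H = {g \<in> carrier G. \<phi> g a = a \<and> \<phi> g b = b}"
definition "P = (\<Union>s\<in>S. sep T x0 (\<phi> s x0))"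
definition "Cross x \<longleftrightarrow> x \<in> carrier G \<and> \<phi> x x0 \<in> Side T b a \<and> (\<exists>s\<in>S. \<phi> (x \<otimes>\<^bsub>G\<^esub> s) x0 \<in> Side T a b)"
definition "Br r = wprod G ` {xs. set xs \<subseteq> S \<and> length xs < r}"
definition "EC = {e. \<exists>c\<in>carrier G. e = (\<phi> c a, \<phi> c b)}"

lemma ba: "T b a" using symT[OF ab] .

lemma P_fin: "finite P" unfolding P_def using Sfin sep_finite by blast

lemma Br_fin: "finite (Br r)"
proof -
  have "{xs. set xs \<subseteq> S \<and> length xs < r} \<subseteq> {xs. set xs \<subseteq> S \<and> length xs \<le> r}" by auto
  then show ?thesis unfolding Br_def using finite_lists_length_le[OF Sfin, of r] finite_subset by blast
qed

lemma Br_car: "Br r \<subseteq> carrier G"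
  unfolding Br_def using group.wprod_closed[OF grp] Ssub by blast

lemma car_countable: "countable (carrier G)"
proof -
  have "carrier G \<subseteq> wprod G ` {xs. set xs \<subseteq> S}"
    using group.gen_words[OF grp Ssub Ssym] Sgen by simp
  moreover have "countable (wprod G ` {xs. set xs \<subseteq> S})"
  proof -
    have "{xs. set xs \<subseteq> S} = lists S" by auto
    moreover have "countable S" using Sfin by (rule countable_finite)
    ultimately show ?thesis by simp
  qed
  ultimately show ?thesis using countable_subset by blast
qed

lemma H_car: "H \<subseteq> carrier G" unfolding H_def by blast

lemma geo_side:
  assumes h: "h \<in> H" and c: "c \<in> carrier G" and xy: "(x = a \<and> y = b) \<or> (x = b \<and> y = a)"
  shows "\<phi> (h \<otimes>\<^bsub>G\<^esub> inv\<^bsub>G\<^esub> c) z \<in> Side T x y \<longleftrightarrow> z \<in> Side T (\<phi> c x) (\<phi> c y)"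
proof -
  have hc: "h \<in> carrier G" "\<phi> h a = a" "\<phi> h b = b" using h unfolding H_def by auto
  have ic: "inv\<^bsub>G\<^esub> c \<in> carrier G" using group.inv_closed[OF grp c] .
  have "\<phi> (h \<otimes>\<^bsub>G\<^esub> inv\<^bsub>G\<^esub> c) z = \<phi> h (\<phi> (inv\<^bsub>G\<^esub> c) z)" using phi_comp[OF hc(1) ic] .
  moreover have "\<phi> h w \<in> Side T x y \<longleftrightarrow> w \<in> Side T x y" for w
    using Side_equiv[OF hc(1), of w x y] hc xy by auto
  moreover have "\<phi> (inv\<^bsub>G\<^esub> c) z \<in> Side T x y \<longleftrightarrow> z \<in> Side T (\<phi> c x) (\<phi> c y)"
    using Side_equiv[OF c, of "\<phi> (inv\<^bsub>G\<^esub> c) z" x y] phi_inv2[OF c] by simp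
  ultimately show ?thesis by simp
qed

lemma cross_P: assumes "Cross x" shows "(\<phi> (inv\<^bsub>G\<^esub> x) a, \<phi> (inv\<^bsub>G\<^esub> x) b) \<in> P"
proof -
  obtain s where s: "s \<in> S" "\<phi> (x \<otimes>\<^bsub>G\<^esub> s) x0 \<in> Side T a b" and x: "x \<in> carrier G" "\<phi> x x0 \<in> Side T b a"
    using assms unfolding Cross_def by blast
  have sc: "s \<in> carrier G" using s Ssub by blast
  have "\<phi> x (\<phi> s x0) \<in> Side T a b" using s phi_comp[OF x(1) sc] by simp
  moreover have "\<phi> x x0 \<notin> Side T a b" using x(2) Side_disj[OF ab] by blast
  ultimately have "(a, b) \<in> sep T (\<phi> x x0) (\<phi> x (\<phi> s x0))" using ab unfolding sep_def by simp
  then have "(\<phi> (inv\<^bsub>G\<^esub> x) a, \<phi> (inv\<^bsub>G\<^esub> x) b) \<in> sep T (\<phi> (inv\<^bsub>G\<^esub> x) (\<phi> x x0)) (\<phi> (inv\<^bsub>G\<^esub> x) (\<phi> x (\<phi> s x0)))"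
    using sep_equiv1 group.inv_closed[OF grp x(1)] by blast
  then have "(\<phi> (inv\<^bsub>G\<^esub> x) a, \<phi> (inv\<^bsub>G\<^esub> x) b) \<in> sep T x0 (\<phi> s x0)" using phi_inv[OF x(1)] by simp
  then show ?thesis unfolding P_def using s(1) by blast
qed


lemma U_props:
  assumes e: "e \<in> sep T x0 (\<phi> g x0)" "e \<notin> P" and c: "c \<in> carrier G" "e = (\<phi> c a, \<phi> c b)"
    and h: "h \<in> H" and g: "g \<in> carrier G"
  shows "\<phi> (h \<otimes>\<^bsub>G\<^esub> inv\<^bsub>G\<^esub> c) x0 \<in> Side T b a"
    "\<forall>s\<in>S. \<phi> ((h \<otimes>\<^bsub>G\<^esub> inv\<^bsub>G\<^esub> c) \<otimes>\<^bsub>G\<^esub> s) x0 \<in> Side T b a"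
    "\<phi> ((h \<otimes>\<^bsub>G\<^esub> inv\<^bsub>G\<^esub> c) \<otimes>\<^bsub>G\<^esub> g) x0 \<in> Side T a b"
proof -
  define p where "p = \<phi> c a"
  define q where "q = \<phi> c b"
  have pq: "T p q" unfolding p_def q_def using T_equiv[OF c(1)] ab by simp
  have sepe: "x0 \<notin> Side T p q" "\<phi> g x0 \<in> Side T p q"
    using e(1) c(2) unfolding sep_def p_def q_def by auto
  have hc: "h \<in> carrier G" using h H_car by blast
  have u: "h \<otimes>\<^bsub>G\<^esub> inv\<^bsub>G\<^esub> c \<in> carrier G"
    using hc group.inv_closed[OF grp c(1)] monoid.m_closed[OF group.is_monoid[OF grp]] by blast
  have x0qp: "x0 \<in> Side T q p" using Side_compl[OF pq] sepe(1) by blast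
  show "\<phi> (h \<otimes>\<^bsub>G\<^esub> inv\<^bsub>G\<^esub> c) x0 \<in> Side T b a"
    using geo_side[OF h c(1), of b a x0] x0qp unfolding p_def q_def by simp
  show "\<forall>s\<in>S. \<phi> ((h \<otimes>\<^bsub>G\<^esub> inv\<^bsub>G\<^esub> c) \<otimes>\<^bsub>G\<^esub> s) x0 \<in> Side T b a"
  proof
    fix s assume s: "s \<in> S"
    have sc: "s \<in> carrier G" using s Ssub by blast
    have "e \<notin> sep T x0 (\<phi> s x0)" using e(2) s unfolding P_def by blast
    then have "\<phi> s x0 \<notin> Side T p q" using pq sepe(1) c(2) unfolding sep_def p_def q_def by auto
    then have "\<phi> s x0 \<in> Side T q p" using Side_compl[OF pq] by blast
    then have "\<phi> (h \<otimes>\<^bsub>G\<^esub> inv\<^bsub>G\<^esub> c) (\<phi> s x0) \<in> Side T b a"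
      using geo_side[OF h c(1), of b a "\<phi> s x0"] unfolding p_def q_def by simp
    then show "\<phi> ((h \<otimes>\<^bsub>G\<^esub> inv\<^bsub>G\<^esub> c) \<otimes>\<^bsub>G\<^esub> s) x0 \<in> Side T b a"
      using phi_comp[OF u sc] by simp
  qed
  have "\<phi> (h \<otimes>\<^bsub>G\<^esub> inv\<^bsub>G\<^esub> c) (\<phi> g x0) \<in> Side T a b"
    using geo_side[OF h c(1), of a b "\<phi> g x0"] sepe(2) unfolding p_def q_def by simp
  then show "\<phi> ((h \<otimes>\<^bsub>G\<^esub> inv\<^bsub>G\<^esub> c) \<otimes>\<^bsub>G\<^esub> g) x0 \<in> Side T a b"
    using phi_comp[OF u g] by simp
qed

lemma cross_decomp:
  assumes h: "h \<in> H" and w: "w \<in> carrier G" and y: "y \<in> carrier G"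
    and x: "x = (h \<otimes>\<^bsub>G\<^esub> w) \<otimes>\<^bsub>G\<^esub> y"
    and d: "d \<in> carrier G" "\<phi> (inv\<^bsub>G\<^esub> d) a = \<phi> (inv\<^bsub>G\<^esub> x) a" "\<phi> (inv\<^bsub>G\<^esub> d) b = \<phi> (inv\<^bsub>G\<^esub> x) b"
  shows "w \<otimes>\<^bsub>G\<^esub> y \<otimes>\<^bsub>G\<^esub> inv\<^bsub>G\<^esub> d \<in> H"
    "x = (h \<otimes>\<^bsub>G\<^esub> (w \<otimes>\<^bsub>G\<^esub> y \<otimes>\<^bsub>G\<^esub> inv\<^bsub>G\<^esub> d)) \<otimes>\<^bsub>G\<^esub> d"
proof -
  interpret G: group G by (rule grp)
  have hc: "h \<in> carrier G" "\<phi> h a = a" "\<phi> h b = b" using h unfolding H_def by auto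
  have xc: "x \<in> carrier G" using x hc w y by simp
  define z where "z = w \<otimes>\<^bsub>G\<^esub> y \<otimes>\<^bsub>G\<^esub> inv\<^bsub>G\<^esub> d"
  have zc: "z \<in> carrier G" unfolding z_def using w y d by simp
  have hz: "h \<otimes>\<^bsub>G\<^esub> z = x \<otimes>\<^bsub>G\<^esub> inv\<^bsub>G\<^esub> d" unfolding z_def x using hc w y d by (simp add: G.m_assoc)
  have fix_v: "\<phi> z v = v" if v: "v = a \<or> v = b" for v
  proof -
    have "\<phi> (x \<otimes>\<^bsub>G\<^esub> inv\<^bsub>G\<^esub> d) v = \<phi> x (\<phi> (inv\<^bsub>G\<^esub> d) v)" using phi_comp xc d by simp
    also have "\<dots> = \<phi> x (\<phi> (inv\<^bsub>G\<^esub> x) v)" using d v by auto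
    also have "\<dots> = v" using phi_inv2[OF xc] .
    finally have "\<phi> h (\<phi> z v) = v" using hz phi_comp[OF hc(1) zc] by simp
    then have "\<phi> (inv\<^bsub>G\<^esub> h) (\<phi> h (\<phi> z v)) = \<phi> (inv\<^bsub>G\<^esub> h) v" by simp
    then have "\<phi> z v = \<phi> (inv\<^bsub>G\<^esub> h) v" using phi_inv[OF hc(1)] by simp
    also have "\<dots> = \<phi> (inv\<^bsub>G\<^esub> h) (\<phi> h v)" using hc v by auto
    also have "\<dots> = v" using phi_inv[OF hc(1)] .
    finally show ?thesis .
  qed
  show "w \<otimes>\<^bsub>G\<^esub> y \<otimes>\<^bsub>G\<^esub> inv\<^bsub>G\<^esub> d \<in> H" using fix_v zc unfolding H_def z_def by auto
  have "(h \<otimes>\<^bsub>G\<^esub> z) \<otimes>\<^bsub>G\<^esub> d = x" using hz xc d by (simp add: G.m_assoc)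
  then show "x = (h \<otimes>\<^bsub>G\<^esub> (w \<otimes>\<^bsub>G\<^esub> y \<otimes>\<^bsub>G\<^esub> inv\<^bsub>G\<^esub> d)) \<otimes>\<^bsub>G\<^esub> d" unfolding z_def by simp
qed


lemma rpath_cayley_car: "rpath (cayley_adj G S) ws \<Longrightarrow> hd ws \<in> carrier G \<Longrightarrow> set ws \<subseteq> carrier G"
  by (induction "cayley_adj G S" ws rule: rpath.induct) (auto simp: cayley_adj_def)

lemma ET: "extraterrestrial (carrier G) (cayley_adj G S)"
  unfolding extraterrestrial_def
proof
  fix m :: nat
  interpret G: group G by (rule grp)
  define nP where "nP = card P"
  define M where "M = 2 * m * nP + 1"
  obtain g where g: "g \<in> carrier G" "M + nP \<le> card (sep T x0 (\<phi> g x0) \<inter> EC)"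
    using longsep unfolding EC_def by blast
  define E0 where "E0 = sep T x0 (\<phi> g x0) \<inter> EC - P"
  have "card (sep T x0 (\<phi> g x0) \<inter> EC) - card P \<le> card E0"
    unfolding E0_def using diff_card_le_card_Diff[OF P_fin] .
  then have "M \<le> card E0" using g(2) unfolding nP_def by linarith
  then obtain E where E: "E \<subseteq> E0" "card E = M" "finite E" by (meson obtain_subset_with_card_n)
  have Ene: "E \<noteq> {}" using E(2) unfolding M_def by auto
  define cf where "cf e = (SOME c. c \<in> carrier G \<and> e = (\<phi> c a, \<phi> c b))" for e
  have cf: "cf e \<in> carrier G \<and> e = (\<phi> (cf e) a, \<phi> (cf e) b)" if "e \<in> E" for e
  proof -
    have "\<exists>c. c \<in> carrier G \<and> e = (\<phi> c a, \<phi> c b)" using that E(1) unfolding E0_def EC_def by blast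
    then show ?thesis unfolding cf_def by (rule someI_ex)
  qed
  have Esep: "e \<in> sep T x0 (\<phi> g x0)" "e \<notin> P" if "e \<in> E" for e using that E(1) unfolding E0_def by auto
  define w where "w e = inv\<^bsub>G\<^esub> (cf e)" for e
  have wc: "w e \<in> carrier G" if "e \<in> E" for e unfolding w_def using cf[OF that] by simp
  have "g \<in> wprod G ` {xs. set xs \<subseteq> S}" using G.gen_words[OF Ssub Ssym] Sgen g(1) by blast
  then obtain xg where xg: "set xg \<subseteq> S" "wprod G xg = g" by blast
  show "\<exists>k. \<forall>r. \<exists>U F Ob. U \<subseteq> carrier G \<and> F \<subseteq> carrier G \<and> Ob \<subseteq> carrier G \<and>
        finite U \<and> finite F \<and> finite Ob \<and>
        U \<inter> F = {} \<and> U \<inter> Ob = {} \<and> F \<inter> Ob = {} \<and>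
        U \<noteq> {} \<and> card U \<ge> m * card F \<and>
        (\<exists>\<mu>. bij_betw \<mu> U Ob \<and> (\<forall>u\<in>U. dist_le (carrier G) (cayley_adj G S) u (\<mu> u) k)) \<and>
        (\<forall>xs. walk (carrier G) (cayley_adj G S) xs \<and> hd xs \<in> U \<and> last xs \<in> Ob \<longrightarrow>
             (\<exists>x\<in>set xs. x \<in> F) \<or> length xs - 1 \<ge> r)"
  proof (rule exI[of _ "length xg"], rule allI)
    fix r
    define dd' where "dd' pq = (SOME z. z \<in> carrier G \<and> \<phi> (inv\<^bsub>G\<^esub> z) a = fst pq \<and> \<phi> (inv\<^bsub>G\<^esub> z) b = snd pq)" for pq
    define K where "K = {z \<in> H. \<exists>e\<in>E. \<exists>y\<in>Br r. \<exists>pq\<in>P. z = w e \<otimes>\<^bsub>G\<^esub> y \<otimes>\<^bsub>G\<^esub> inv\<^bsub>G\<^esub> (dd' pq)}"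
    have Kfin: "finite K"
    proof -
      have "K \<subseteq> (\<lambda>(e, y, pq). w e \<otimes>\<^bsub>G\<^esub> y \<otimes>\<^bsub>G\<^esub> inv\<^bsub>G\<^esub> (dd' pq)) ` (E \<times> Br r \<times> P)"
        unfolding K_def by force
      moreover have "finite (E \<times> Br r \<times> P)" using E(3) Br_fin P_fin by simp
      ultimately show ?thesis using finite_subset by blast
    qed
    have KH: "K \<subseteq> H" unfolding K_def by blast
    have cH: "countable H" using car_countable H_car countable_subset by blast
    obtain A where A: "A \<subseteq> H" "finite A" "A \<noteq> {}"
      "card ((\<lambda>(a', k'). a' \<otimes>\<^bsub>G\<^esub> k') ` (A \<times> K)) \<le> 2 * card A"
      using inv_mean.folner[OF mean, of K] cH KH Kfin unfolding H_def by blast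
    define AK where "AK = (\<lambda>(a', k'). a' \<otimes>\<^bsub>G\<^esub> k') ` (A \<times> K)"
    define U where "U = (\<Union>e\<in>E. (\<lambda>h. h \<otimes>\<^bsub>G\<^esub> w e) ` A)"
    define F where "F = {x. Cross x \<and> (\<exists>u\<in>U. \<exists>y\<in>Br r. x = u \<otimes>\<^bsub>G\<^esub> y)}"
    define Ob where "Ob = (\<lambda>u. u \<otimes>\<^bsub>G\<^esub> g) ` U"
    have Acar: "A \<subseteq> carrier G" using A(1) H_car by blast
    have Ucar: "U \<subseteq> carrier G" unfolding U_def using Acar wc by auto
    have Uside: "\<phi> x x0 \<in> Side T b a \<and> (\<forall>s\<in>S. \<phi> (x \<otimes>\<^bsub>G\<^esub> s) x0 \<in> Side T b a) \<and> \<phi> (x \<otimes>\<^bsub>G\<^esub> g) x0 \<in> Side T a b"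
      if xU: "x \<in> U" for x
    proof -
      obtain e h where eh: "e \<in> E" "h \<in> A" "x = h \<otimes>\<^bsub>G\<^esub> w e" using xU unfolding U_def by blast
      have "h \<in> H" using eh A(1) by blast
      then show ?thesis using U_props[OF Esep[OF eh(1)] conjunct1[OF cf[OF eh(1)]] conjunct2[OF cf[OF eh(1)]] _ g(1)]
        eh(3) unfolding w_def by blast
    qed
    have Fcar: "F \<subseteq> carrier G" unfolding F_def Cross_def by blast
    have Fside: "\<phi> x x0 \<in> Side T b a" if "x \<in> F" for x using that unfolding F_def Cross_def by blast
    have Obcar: "Ob \<subseteq> carrier G" unfolding Ob_def using Ucar g(1) by auto
    have Obside: "\<phi> x x0 \<in> Side T a b" if "x \<in> Ob" for x using that Uside unfolding Ob_def by blast
    have disjS: "\<not> (z \<in> Side T a b \<and> z \<in> Side T b a)" for z using Side_disj[OF ab] by blast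
    have finU: "finite U" unfolding U_def using E(3) A(2) by simp
    have UF: "U \<inter> F = {}"
    proof -
      have "x \<notin> F" if "x \<in> U" for x
      proof
        assume "x \<in> F"
        then obtain s where "s \<in> S" "\<phi> (x \<otimes>\<^bsub>G\<^esub> s) x0 \<in> Side T a b" unfolding F_def Cross_def by blast
        then show False using Uside[OF that] disjS by blast
      qed
      then show ?thesis by blast
    qed
    have UO: "U \<inter> Ob = {}" using Uside Obside disjS by blast
    have FO: "F \<inter> Ob = {}" using Fside Obside disjS by blast
    have Une: "U \<noteq> {}" unfolding U_def using Ene A(3) by blast
    have cardU: "card U = M * card A"
    proof -
      have "card U = (\<Sum>e\<in>E. card ((\<lambda>h. h \<otimes>\<^bsub>G\<^esub> w e) ` A))"
        unfolding U_def
      proof (rule card_UN_disjoint)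
        show "finite E" by (rule E(3))
        show "\<forall>e\<in>E. finite ((\<lambda>h. h \<otimes>\<^bsub>G\<^esub> w e) ` A)" using A(2) by simp
        show "\<forall>e1\<in>E. \<forall>e2\<in>E. e1 \<noteq> e2 \<longrightarrow> (\<lambda>h. h \<otimes>\<^bsub>G\<^esub> w e1) ` A \<inter> (\<lambda>h. h \<otimes>\<^bsub>G\<^esub> w e2) ` A = {}"
        proof (intro ballI impI)
          fix e1 e2 assume e: "e1 \<in> E" "e2 \<in> E" "e1 \<noteq> e2"
          show "(\<lambda>h. h \<otimes>\<^bsub>G\<^esub> w e1) ` A \<inter> (\<lambda>h. h \<otimes>\<^bsub>G\<^esub> w e2) ` A = {}"
          proof (rule ccontr)
            assume "\<not> ?thesis"
            then obtain h1 h2 where hh: "h1 \<in> A" "h2 \<in> A" "h1 \<otimes>\<^bsub>G\<^esub> w e1 = h2 \<otimes>\<^bsub>G\<^esub> w e2" by blast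
            define x where "x = h1 \<otimes>\<^bsub>G\<^esub> w e1"
            have h1c: "h1 \<in> carrier G" using hh(1) Acar by blast
            have xc: "x \<in> carrier G" unfolding x_def using G.m_closed[OF h1c wc[OF e(1)]] .
            have fixv: "\<phi> x (\<phi> (cf ei) v) = v" if eiv: "ei = e1 \<or> ei = e2" "v = a \<or> v = b" for ei v
            proof -
              obtain hi where hi: "hi \<in> A" "x = hi \<otimes>\<^bsub>G\<^esub> w ei" using eiv(1) hh unfolding x_def by blast
              have hiH: "hi \<in> carrier G" "\<phi> hi a = a" "\<phi> hi b = b" using hi(1) A(1) unfolding H_def by auto
              have ci: "cf ei \<in> carrier G" using cf e eiv(1) by blast
              have "\<phi> x (\<phi> (cf ei) v) = \<phi> hi (\<phi> (w ei) (\<phi> (cf ei) v))"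
              proof -
                have "ei \<in> E" using e eiv(1) by blast
                then have wi: "w ei \<in> carrier G" by (rule wc)
                show ?thesis using hi(2) phi_comp[OF hiH(1) wi] by simp
              qed
              also have "\<dots> = \<phi> hi v" unfolding w_def using phi_inv[OF ci] by simp
              also have "\<dots> = v" using hiH eiv(2) by auto
              finally show ?thesis .
            qed
            have "\<phi> x (\<phi> (cf e1) a) = \<phi> x (\<phi> (cf e2) a)" using fixv[of e1 a] fixv[of e2 a] by simp
            then have "\<phi> (cf e1) a = \<phi> (cf e2) a" using phi_inj[OF xc] by blast
            moreover have "\<phi> x (\<phi> (cf e1) b) = \<phi> x (\<phi> (cf e2) b)" using fixv[of e1 b] fixv[of e2 b] by simp
            then have "\<phi> (cf e1) b = \<phi> (cf e2) b" using phi_inj[OF xc] by blast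
            ultimately have "e1 = e2" using cf e by (metis (no_types, lifting))
            then show False using e(3) by simp
          qed
        qed
      qed
      also have "\<dots> = (\<Sum>e\<in>E. card A)"
      proof (rule sum.cong)
        fix e assume "e \<in> E"
        have "inj_on (\<lambda>h. h \<otimes>\<^bsub>G\<^esub> w e) A"
        proof (rule inj_onI)
          fix h1 h2 assume hh: "h1 \<in> A" "h2 \<in> A" "h1 \<otimes>\<^bsub>G\<^esub> w e = h2 \<otimes>\<^bsub>G\<^esub> w e"
          have "h1 \<in> carrier G" "h2 \<in> carrier G" using hh Acar by auto
          then show "h1 = h2" using G.right_cancel[OF wc[OF \<open>e \<in> E\<close>]] hh(3) by blast
        qed
        then show "card ((\<lambda>h. h \<otimes>\<^bsub>G\<^esub> w e) ` A) = card A" by (rule card_image)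
      qed simp
      finally show ?thesis using E(2) by simp
    qed
    have cardF: "card F \<le> 2 * card A * nP"
    proof -
      have "F \<subseteq> (\<lambda>(z, pq). z \<otimes>\<^bsub>G\<^esub> dd' pq) ` (AK \<times> P)"
      proof
        fix x assume x: "x \<in> F"
        then obtain u y where uy: "Cross x" "u \<in> U" "y \<in> Br r" "x = u \<otimes>\<^bsub>G\<^esub> y" unfolding F_def by blast
        obtain e h where eh: "e \<in> E" "h \<in> A" "u = h \<otimes>\<^bsub>G\<^esub> w e" using uy(2) unfolding U_def by blast
        have xc: "x \<in> carrier G" using uy(1) unfolding Cross_def by blast
        define pq where "pq = (\<phi> (inv\<^bsub>G\<^esub> x) a, \<phi> (inv\<^bsub>G\<^esub> x) b)"
        have pqP: "pq \<in> P" unfolding pq_def using cross_P[OF uy(1)] .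
        have "\<exists>z. z \<in> carrier G \<and> \<phi> (inv\<^bsub>G\<^esub> z) a = fst pq \<and> \<phi> (inv\<^bsub>G\<^esub> z) b = snd pq"
          using xc unfolding pq_def by auto
        then have d: "dd' pq \<in> carrier G" "\<phi> (inv\<^bsub>G\<^esub> (dd' pq)) a = \<phi> (inv\<^bsub>G\<^esub> x) a"
          "\<phi> (inv\<^bsub>G\<^esub> (dd' pq)) b = \<phi> (inv\<^bsub>G\<^esub> x) b"
          unfolding dd'_def pq_def by (metis (mono_tags, lifting) fst_conv snd_conv someI_ex)+
        have hH: "h \<in> H" using eh A(1) by blast
        have yc: "y \<in> carrier G" using uy(3) Br_car by blast
        have dec: "w e \<otimes>\<^bsub>G\<^esub> y \<otimes>\<^bsub>G\<^esub> inv\<^bsub>G\<^esub> (dd' pq) \<in> H"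
          "x = (h \<otimes>\<^bsub>G\<^esub> (w e \<otimes>\<^bsub>G\<^esub> y \<otimes>\<^bsub>G\<^esub> inv\<^bsub>G\<^esub> (dd' pq))) \<otimes>\<^bsub>G\<^esub> dd' pq"
          using cross_decomp[OF hH wc[OF eh(1)] yc _ d] uy(4) eh(3) by auto
        have "w e \<otimes>\<^bsub>G\<^esub> y \<otimes>\<^bsub>G\<^esub> inv\<^bsub>G\<^esub> (dd' pq) \<in> K"
          unfolding K_def using dec(1) eh(1) uy(3) pqP by blast
        then have "h \<otimes>\<^bsub>G\<^esub> (w e \<otimes>\<^bsub>G\<^esub> y \<otimes>\<^bsub>G\<^esub> inv\<^bsub>G\<^esub> (dd' pq)) \<in> AK"
          unfolding AK_def using eh(2) by force
        then show "x \<in> (\<lambda>(z, pq). z \<otimes>\<^bsub>G\<^esub> dd' pq) ` (AK \<times> P)"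
          using dec(2) pqP by force
      qed
      moreover have "finite (AK \<times> P)" unfolding AK_def using A(2) Kfin P_fin by simp
      ultimately have "card F \<le> card (AK \<times> P)" by (meson card_image_le finite_imageI card_mono order_trans)
      also have "\<dots> = card AK * nP" unfolding nP_def by (simp add: card_cartesian_product)
      also have "\<dots> \<le> 2 * card A * nP" using A(4) unfolding AK_def by simp
      finally show ?thesis .
    qed
    have finF: "finite F"
    proof -
      have "F \<subseteq> (\<lambda>(u, y). u \<otimes>\<^bsub>G\<^esub> y) ` (U \<times> Br r)" unfolding F_def by force
      then show ?thesis using finU Br_fin finite_subset by blast
    qed
    have mU: "m * card F \<le> card U"
    proof -
      have "m * card F \<le> m * (2 * card A * nP)" using cardF by simp
      also have "\<dots> \<le> M * card A" unfolding M_def by (simp add: algebra_simps)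
      finally show ?thesis using cardU by simp
    qed
    have bij: "bij_betw (\<lambda>u. u \<otimes>\<^bsub>G\<^esub> g) U Ob"
      unfolding Ob_def
    proof (intro inj_on_imp_bij_betw inj_onI)
      fix u1 u2 assume uu: "u1 \<in> U" "u2 \<in> U" "u1 \<otimes>\<^bsub>G\<^esub> g = u2 \<otimes>\<^bsub>G\<^esub> g"
      have "u1 \<in> carrier G" "u2 \<in> carrier G" using uu Ucar by auto
      then show "u1 = u2" using G.right_cancel[OF g(1)] uu(3) by blast
    qed
    have dist: "dist_le (carrier G) (cayley_adj G S) u (u \<otimes>\<^bsub>G\<^esub> g) (length xg)" if uU: "u \<in> U" for u
    proof -
      have uc: "u \<in> carrier G" using uU Ucar by blast
      obtain ws where ws: "rpath (cayley_adj G S) ws" "hd ws = u" "last ws = u \<otimes>\<^bsub>G\<^esub> wprod G xg"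
        "length ws = Suc (length xg)"
        using G.cayley_walk[OF Ssub xg(1) uc] by blast
      have "walk (carrier G) (cayley_adj G S) ws" unfolding walk_iff using ws rpath_cayley_car uc by blast
      then show ?thesis unfolding dist_le_def using ws xg(2) by auto
    qed
    have sepa: "(\<exists>x\<in>set xs. x \<in> F) \<or> length xs - 1 \<ge> r"
      if xs: "walk (carrier G) (cayley_adj G S) xs" "hd xs \<in> U" "last xs \<in> Ob" for xs
    proof (cases "length xs - 1 \<ge> r")
      case True then show ?thesis by simp
    next
      case False
      have rp: "rpath (cayley_adj G S) xs" using xs(1) walk_iff by blast
      have "\<phi> (hd xs) x0 \<in> Side T b a" using Uside xs(2) by blast
      moreover have "\<not> \<phi> (last xs) x0 \<in> Side T b a" using Obside xs(3) disjS by blast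
      ultimately obtain j where j: "Suc j < length xs" "\<phi> (xs ! j) x0 \<in> Side T b a" "\<not> \<phi> (xs ! Suc j) x0 \<in> Side T b a"
        using rpath_first_exit[OF rp, of "\<lambda>x. \<phi> x x0 \<in> Side T b a"] by blast
      have "cayley_adj G S (xs ! j) (xs ! Suc j)" using rpath_steps[OF rp j(1)] .
      then obtain s where s: "s \<in> S" "xs ! Suc j = xs ! j \<otimes>\<^bsub>G\<^esub> s" "xs ! j \<in> carrier G"
        unfolding cayley_adj_def by blast
      have "\<phi> (xs ! j \<otimes>\<^bsub>G\<^esub> s) x0 \<in> Side T a b" using j(3) s(2) Side_compl[OF ba] by simp
      then have cr: "Cross (xs ! j)" unfolding Cross_def using s j(2) by blast
      have hdc: "hd xs \<in> carrier G" using xs(2) Ucar by blast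
      obtain zs where zs: "set zs \<subseteq> S" "length zs = j" "xs ! j = hd xs \<otimes>\<^bsub>G\<^esub> wprod G zs"
        using G.cayley_walk_pos[OF Ssub rp _ hdc, of j] j(1) by auto
      have "j < r" using j(1) False by linarith
      then have "wprod G zs \<in> Br r" unfolding Br_def using zs by blast
      then have "xs ! j \<in> F" unfolding F_def using cr zs(3) xs(2) by blast
      moreover have "xs ! j \<in> set xs" using j(1) by simp
      ultimately show ?thesis by blast
    qed
    show "\<exists>U F Ob. U \<subseteq> carrier G \<and> F \<subseteq> carrier G \<and> Ob \<subseteq> carrier G \<and>
        finite U \<and> finite F \<and> finite Ob \<and>
        U \<inter> F = {} \<and> U \<inter> Ob = {} \<and> F \<inter> Ob = {} \<and>
        U \<noteq> {} \<and> card U \<ge> m * card F \<and>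
        (\<exists>\<mu>. bij_betw \<mu> U Ob \<and> (\<forall>u\<in>U. dist_le (carrier G) (cayley_adj G S) u (\<mu> u) (length xg))) \<and>
        (\<forall>xs. walk (carrier G) (cayley_adj G S) xs \<and> hd xs \<in> U \<and> last xs \<in> Ob \<longrightarrow>
             (\<exists>x\<in>set xs. x \<in> F) \<or> length xs - 1 \<ge> r)"
      apply (rule exI[of _ U], rule exI[of _ F], rule exI[of _ Ob])
      using Ucar Fcar Obcar finU finF UF UO FO Une mU bij dist sepa
      unfolding Ob_def by (auto intro!: exI[of _ "\<lambda>u. u \<otimes>\<^bsub>G\<^esub> g"])
  qed
qed

end

theorem mainTheorem13:
  fixes G :: "('g, 'b) monoid_scheme"
    and \<phi> :: "'g \<Rightarrow> 'v \<Rightarrow> 'v"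
    and T :: "'v \<Rightarrow> 'v \<Rightarrow> bool"
  assumes "group G"
    and "finitely_generated G"
    and "acts_on_tree G \<phi> T"
    and "without_inversions G \<phi> T"
    and "cocompact G \<phi> T"
    and "\<not> (\<exists>v. \<forall>g\<in>carrier G. \<phi> g v = v)"
    and "\<forall>u v. T u v \<longrightarrow> amenable (G\<lparr>carrier := edge_stabilizer G \<phi> u v\<rparr>)"
  shows "extraterrestrial_group G"
proof -
  note grp = assms(1) and fg = assms(2) and act = assms(3) and noinv = assms(4) and cc = assms(5)
    and nofix = assms(6) and amen = assms(7)
  interpret G: group G by (rule grp)
  have TA: "tree_action T G \<phi>"
  proof (intro tree_action.intro tree.intro tree_action_axioms.intro)
    show "is_tree T" using act unfolding acts_on_tree_def by blast
    show "group_action G UNIV \<phi>" using act unfolding acts_on_tree_def by blast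
    show "\<forall>g\<in>carrier G. \<forall>u v. T u v \<longleftrightarrow> T (\<phi> g u) (\<phi> g v)" using act unfolding acts_on_tree_def by blast
  qed (rule grp)
  interpret tree_action T G \<phi> by (rule TA)
  obtain S0 where S0: "finite S0" "S0 \<subseteq> carrier G" "generate G S0 = carrier G"
    using fg unfolding finitely_generated_def by blast
  define S where "S = S0 \<union> (\<lambda>s. inv\<^bsub>G\<^esub> s) ` S0"
  have Sfin: "finite S" unfolding S_def using S0 by simp
  have Ssub: "S \<subseteq> carrier G" unfolding S_def using S0 by auto
  have Ssym: "\<forall>s\<in>S. inv\<^bsub>G\<^esub> s \<in> S" unfolding S_def using S0 by auto
  have Sgen: "generate G S = carrier G"
  proof
    show "generate G S \<subseteq> carrier G" using G.generate_incl[OF Ssub] .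
    have "generate G S0 \<subseteq> generate G S" using G.mono_generate[of S0 S] unfolding S_def by blast
    then show "carrier G \<subseteq> generate G S" using S0(3) by simp
  qed
  define x0 :: 'v where "x0 = undefined"
  have unb: "\<exists>g\<in>carrier G. R < dd T x0 (\<phi> g x0)" for R
  proof (rule ccontr)
    assume "\<not> ?thesis"
    then have "\<forall>g\<in>carrier G. dd T x0 (\<phi> g x0) \<le> R" by (simp add: not_less)
    then show False using fixed_point[OF noinv] nofix by blast
  qed
  define cls where "cls = (\<lambda>(u, v). {(\<phi> g u, \<phi> g v) | g. g \<in> carrier G})"
  define CL where "CL = cls ` {(u, v). T u v}"
  have CLfin: "finite CL" using cc unfolding cocompact_def CL_def cls_def by blast
  define fib where "fib g c = {e \<in> sep T x0 (\<phi> g x0). cls e = c}" for g c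
  have "\<exists>c\<in>CL. \<forall>M. \<exists>g\<in>carrier G. M \<le> card (fib g c)"
  proof (rule ccontr)
    assume "\<not> ?thesis"
    then have "\<forall>c\<in>CL. \<exists>M. \<forall>g\<in>carrier G. card (fib g c) < M" by (meson not_le)
    then obtain Mc where Mc: "\<And>c g. c \<in> CL \<Longrightarrow> g \<in> carrier G \<Longrightarrow> card (fib g c) < Mc c" by metis
    obtain g where g: "g \<in> carrier G" "(\<Sum>c\<in>CL. Mc c) < dd T x0 (\<phi> g x0)" using unb by blast
    have "sep T x0 (\<phi> g x0) \<subseteq> (\<Union>c\<in>CL. fib g c)"
      unfolding fib_def CL_def sep_def by auto
    then have "dd T x0 (\<phi> g x0) \<le> card (\<Union>c\<in>CL. fib g c)"
    proof -
      have "finite (fib g c')" for c'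
        unfolding fib_def using sep_finite[of x0 "\<phi> g x0"] by simp
      then have "finite (\<Union>c\<in>CL. fib g c)" using CLfin by blast
      then show ?thesis unfolding dd_def using card_mono \<open>sep T x0 (\<phi> g x0) \<subseteq> (\<Union>c\<in>CL. fib g c)\<close> by blast
    qed
    also have "\<dots> \<le> (\<Sum>c\<in>CL. card (fib g c))" using card_UN_le[OF CLfin] .
    also have "\<dots> \<le> (\<Sum>c\<in>CL. Mc c)" using Mc g(1) by (intro sum_mono) (simp add: less_imp_le)
    finally show False using g(2) by simp
  qed
  then obtain c where c: "c \<in> CL" "\<forall>M. \<exists>g\<in>carrier G. M \<le> card (fib g c)" by blast
  then obtain a b where ab: "T a b" "c = cls (a, b)" unfolding CL_def by blast
  have longsep: "\<forall>M. \<exists>g\<in>carrier G. M \<le> card (sep T x0 (\<phi> g x0) \<inter> {e. \<exists>c\<in>carrier G. e = (\<phi> c a, \<phi> c b)})"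
  proof
    fix M
    obtain g where g: "g \<in> carrier G" "M \<le> card (fib g c)" using c(2) by blast
    have "fib g c \<subseteq> sep T x0 (\<phi> g x0) \<inter> {e. \<exists>c\<in>carrier G. e = (\<phi> c a, \<phi> c b)}"
    proof
      fix e assume e: "e \<in> fib g c"
      obtain p q where pq: "e = (p, q)" by fastforce
      have "(\<phi> \<one>\<^bsub>G\<^esub> p, \<phi> \<one>\<^bsub>G\<^esub> q) \<in> {(\<phi> g p, \<phi> g q) | g. g \<in> carrier G}"
        using G.one_closed by blast
      then have "(p, q) \<in> cls (p, q)" unfolding cls_def by (simp only: phi_one case_prod_conv)
      then have "(p, q) \<in> cls (a, b)" using e pq ab(2) unfolding fib_def by simp
      then show "e \<in> sep T x0 (\<phi> g x0) \<inter> {e. \<exists>c\<in>carrier G. e = (\<phi> c a, \<phi> c b)}"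
        using e pq unfolding fib_def cls_def by auto
    qed
    then have "card (fib g c) \<le> card (sep T x0 (\<phi> g x0) \<inter> {e. \<exists>c\<in>carrier G. e = (\<phi> c a, \<phi> c b)})"
      using sep_finite by (intro card_mono) auto
    then show "\<exists>g\<in>carrier G. M \<le> card (sep T x0 (\<phi> g x0) \<inter> {e. \<exists>c\<in>carrier G. e = (\<phi> c a, \<phi> c b)})"
      using g by (meson order_trans)
  qed
  define Hs where "Hs = {g \<in> carrier G. \<phi> g a = a \<and> \<phi> g b = b}"
  have es: "edge_stabilizer G \<phi> a b = Hs"
    unfolding edge_stabilizer_def Hs_def using noinv ab(1) unfolding without_inversions_def by blast
  have subH: "subgroup Hs G"
  proof (rule G.subgroupI)
    show "Hs \<subseteq> carrier G" unfolding Hs_def by blast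
    show "Hs \<noteq> {}" unfolding Hs_def using G.one_closed phi_one by blast
  next
    fix h assume h: "h \<in> Hs"
    then have hc: "h \<in> carrier G" "\<phi> h a = a" "\<phi> h b = b" unfolding Hs_def by auto
    have "\<phi> (inv\<^bsub>G\<^esub> h) a = a" using phi_inv[OF hc(1), of a] hc by simp
    moreover have "\<phi> (inv\<^bsub>G\<^esub> h) b = b" using phi_inv[OF hc(1), of b] hc by simp
    ultimately show "inv\<^bsub>G\<^esub> h \<in> Hs" unfolding Hs_def using hc by simp
  next
    fix h1 h2 assume "h1 \<in> Hs" "h2 \<in> Hs"
    then show "h1 \<otimes>\<^bsub>G\<^esub> h2 \<in> Hs" unfolding Hs_def using phi_comp by auto
  qed
  have "amenable (G\<lparr>carrier := Hs\<rparr>)" using amen ab(1) es by metis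
  then obtain \<mu> :: "'g set \<Rightarrow> real" where mu: "\<mu> Hs = 1" "\<forall>A. A \<subseteq> Hs \<longrightarrow> \<mu> A \<ge> 0"
    "\<forall>A B. A \<subseteq> Hs \<longrightarrow> B \<subseteq> Hs \<longrightarrow> A \<inter> B = {} \<longrightarrow> \<mu> (A \<union> B) = \<mu> A + \<mu> B"
    "\<forall>g A. g \<in> Hs \<longrightarrow> A \<subseteq> Hs \<longrightarrow> \<mu> ((\<lambda>x. g \<otimes>\<^bsub>G\<^esub> x) ` A) = \<mu> A"
  proof -
    have "\<exists>\<mu> :: 'g set \<Rightarrow> real. \<mu> Hs = 1 \<and> (\<forall>A. A \<subseteq> Hs \<longrightarrow> \<mu> A \<ge> 0) \<and>
      (\<forall>A B. A \<subseteq> Hs \<longrightarrow> B \<subseteq> Hs \<longrightarrow> A \<inter> B = {} \<longrightarrow> \<mu> (A \<union> B) = \<mu> A + \<mu> B) \<and>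
      (\<forall>g A. g \<in> Hs \<longrightarrow> A \<subseteq> Hs \<longrightarrow> \<mu> ((\<lambda>x. g \<otimes>\<^bsub>G\<^esub> x) ` A) = \<mu> A)"
    proof -
      have c1: "carrier (G\<lparr>carrier := Hs\<rparr>) = Hs" by simp
      have m1: "mult (G\<lparr>carrier := Hs\<rparr>) = mult G" by simp
      show ?thesis using \<open>amenable (G\<lparr>carrier := Hs\<rparr>)\<close> unfolding amenable_def c1 m1 .
    qed
    then show ?thesis using that by blast
  qed
  have mean: "inv_mean G Hs \<mu>"
    using grp subH mu by (intro inv_mean.intro) auto
  have MC: "main_ctx T G \<phi> S a b x0 \<mu>"
    using noinv Sfin Ssub Ssym Sgen ab(1) mean longsep unfolding Hs_def
    by (intro main_ctx.intro[OF TA] main_ctx_axioms.intro) auto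
  have "extraterrestrial (carrier G) (cayley_adj G S)" using main_ctx.ET[OF MC] .
  then show ?thesis unfolding extraterrestrial_group_def using Sfin Ssub Ssym Sgen by blast
qed

end
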